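(* Let $(\mathfrak g,d,[\,,\,])$ be a differential graded Lie algebra and $\eta:\mathfrak g\to\mathfrak g[-1]$ any linear map. Let $(\mathfrak g,\mu_* )$ be the $L_\infty$-algebra given by $\mu_1=d$, $\mu_2(v_1,v_2)=(d\eta+\eta d)[v_1,v_2]$ and, for $n\ge3$, $\mu_n(v_1,\dots,v_n)=(-1)^n\sum_{\sigma\in Sh(n-1,n)}(-1)^{\tilde\sigma}e(\sigma)\,\eta[\mu_{n-1}(v_{\sigma(1)},\dots,v_{\sigma(n-1)}),v_{\sigma(n)}]$. Then the Kuranishi map $K$ with components $$K_1(v_1)=v_1,\qquad K_2(v_1,v_2)=\eta[v_1,v_2],\qquad K_n=0\ \ (n\ge3)$$ is an $L_\infty$-isomorphism from $(\mathfrak g,\mu_* )$ to the differential abelian Lie algebra $(\mathfrak g,d,0)$.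
   Context: For a $\mathbb Z$-graded vector space $\mathfrak g$, $\mathfrak g[n]$ is the shift with $(\mathfrak g[n])^i=\mathfrak g^{i+n}$; $\tilde v$ is the parity of the degree of homogeneous $v$. $Sh(k,n)$ is the set of permutations $\sigma$ of $\{1,\dots,n\}$ with $\sigma(1)<\dots<\sigma(k)$ and $\sigma(k+1)<\dots<\sigma(n)$; $\tilde\sigma$ is its parity and the Koszul sign $e(\sigma)$ is defined by $v_{\sigma(1)}\wedge\dots\wedge v_{\sigma(n)}=(-1)^{\tilde\sigma}e(\sigma)v_1\wedge\dots\wedge v_n$. An $L_\infty$-algebra is a graded space with maps $\mu_k:\Lambda^k\mathfrak g\to\mathfrak g[2-k]$ satisfying, for all $n\ge1$, $\sum_{k+l=n+1}\sum_{\sigma\in Sh(k,n)}(-1)^{\tilde\sigma+k(l-1)}e(\sigma)\mu_l(\mu_k(v_{\sigma(1)},\dots,v_{\sigma(k)}),v_{\sigma(k+1)},\dots,v_{\sigma(n)})=0$. A differential abelian Lie algebra $(\mathfrak g',d',0)$ is the $L_\infty$-algebra with $\mu'_1=d'$ and $\mu'_n=0$ for $n\ge2$. An $L_\infty$-morphism from an $L_\infty$-algebra $(\mathfrak g,\mu_* )$ to a differential abelian Lie algebra $(\mathfrak g',d',0)$ is a family of linear maps $F_n:\Lambda^n\mathfrak g\to\mathfrak g'[1-n]$, $n\ge1$, such that for all $n\ge1$ and all $v_1,\dots,v_n$, $$d'F_n(v_1,\dots,v_n)=\sum_{k+l=n+1}\sum_{\sigma\in Sh(k,n)}(-1)^{\tilde\sigma+k(l-1)}e(\sigma)\,F_l\big(\mu_k(v_{\sigma(1)},\dots,v_{\sigma(k)}),v_{\sigma(k+1)},\dots,v_{\sigma(n)}\big).$$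 It is an $L_\infty$-isomorphism if $F_1:\mathfrak g\to\mathfrak g'$ is an isomorphism of graded vector spaces. *)

theory Defs
  imports Complex_Main "HOL-Combinatorics.Permutations"
begin

text \<open>A graded vector space over a field 'k (char 0) is the whole type 'v
 with a family of subspaces V i (i :: int) forming a direct sum decomposition.
 Multilinear maps on Lambda^n g are represented by their values on homogeneous
 arguments: f ks vs, where vs is the list of arguments (arity = length vs)
 and ks the list of their degrees (vs!j in V (ks!j)). Indices are 0-based.\<close>

definition graded_vs :: "('k::field \<Rightarrow> 'v::ab_group_add \<Rightarrow> 'v) \<Rightarrow> (int \<Rightarrow> 'v set) \<Rightarrow> bool" where
  "graded_vs sc V \<longleftrightarrow> vector_space sc \<and> (\<forall>i. 0 \<in> V i \<and> (\<forall>x\<in>V i. \<forall>y\<in>V i. x + y \<in> V i) \<and> (\<forall>c. \<forall>x\<in>V i. sc c x \<in> V i))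
     \<and> (\<forall>v. \<exists>I x. finite I \<and> (\<forall>i\<in>I. x i \<in> V i) \<and> v = sum x I)
     \<and> (\<forall>I x. finite I \<longrightarrow> (\<forall>i\<in>I. x i \<in> V i) \<longrightarrow> sum x I = 0 \<longrightarrow> (\<forall>i\<in>I. x i = 0))"

text \<open>Linear map of degree r (i.e. a linear map g -> g[r]).\<close>
definition graded_lin :: "('k::field \<Rightarrow> 'v::ab_group_add \<Rightarrow> 'v) \<Rightarrow> (int \<Rightarrow> 'v set) \<Rightarrow> int \<Rightarrow> ('v \<Rightarrow> 'v) \<Rightarrow> bool" where
  "graded_lin sc V r f \<longleftrightarrow> Vector_Spaces.linear sc sc f \<and> (\<forall>i v. v \<in> V i \<longrightarrow> f v \<in> V (i + r))"

definition ksign :: "int \<Rightarrow> int \<Rightarrow> int" where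
  "ksign a b = (if odd a \<and> odd b then -1 else 1)"

definition DGLA :: "('k::field \<Rightarrow> 'v::ab_group_add \<Rightarrow> 'v) \<Rightarrow> (int \<Rightarrow> 'v set) \<Rightarrow> ('v \<Rightarrow> 'v) \<Rightarrow> ('v \<Rightarrow> 'v \<Rightarrow> 'v) \<Rightarrow> bool" where
  "DGLA sc V d br \<longleftrightarrow> graded_vs sc V \<and> graded_lin sc V 1 d \<and> (\<forall>v. d (d v) = 0)
     \<and> (\<forall>x. Vector_Spaces.linear sc sc (br x)) \<and> (\<forall>y. Vector_Spaces.linear sc sc (\<lambda>x. br x y))
     \<and> (\<forall>i j x y. x \<in> V i \<longrightarrow> y \<in> V j \<longrightarrow> br x y \<in> V (i + j))
     \<and> (\<forall>i j x y. x \<in> V i \<longrightarrow> y \<in> V j \<longrightarrow> br x y = - sc (of_int (ksign i j)) (br y x))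
     \<and> (\<forall>i j k x y z. x \<in> V i \<longrightarrow> y \<in> V j \<longrightarrow> z \<in> V k \<longrightarrow>
           br x (br y z) = br (br x y) z + sc (of_int (ksign i j)) (br y (br x z)))
     \<and> (\<forall>i x y. x \<in> V i \<longrightarrow> d (br x y) = br (d x) y + sc (of_int ((-1) ^ nat \<bar>i\<bar>)) (br x (d y)))"

text \<open>(k,n)-unshuffles Sh(k,n), as permutations of {0..<n}.\<close>
definition shuffles :: "nat \<Rightarrow> nat \<Rightarrow> (nat \<Rightarrow> nat) set" where
  "shuffles k n = {\<sigma>. \<sigma> permutes {..<n} \<and> (\<forall>i j. i < j \<and> j < k \<longrightarrow> \<sigma> i < \<sigma> j)
                         \<and> (\<forall>i j. k \<le> i \<and> i < j \<and> j < n \<longrightarrow> \<sigma> i < \<sigma> j)}"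

definition koszul :: "int list \<Rightarrow> (nat \<Rightarrow> nat) \<Rightarrow> int" where
  "koszul ks \<sigma> = (\<Prod>(i,j)\<in>{(i,j). i < j \<and> j < length ks \<and> \<sigma> j < \<sigma> i}. ksign (ks ! \<sigma> i) (ks ! \<sigma> j))"

definition psub :: "'a list \<Rightarrow> (nat \<Rightarrow> nat) \<Rightarrow> nat \<Rightarrow> nat \<Rightarrow> 'a list" where
  "psub xs \<sigma> a b = map (\<lambda>i. xs ! \<sigma> i) [a..<b]"

primrec kmu :: "('k::field \<Rightarrow> 'v::ab_group_add \<Rightarrow> 'v) \<Rightarrow> ('v \<Rightarrow> 'v) \<Rightarrow> ('v \<Rightarrow> 'v \<Rightarrow> 'v) \<Rightarrow> ('v \<Rightarrow> 'v)
                 \<Rightarrow> nat \<Rightarrow> int list \<Rightarrow> 'v list \<Rightarrow> 'v" where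
  "kmu sc d br eta 0 ks vs = 0"
| "kmu sc d br eta (Suc m) ks vs =
     (if m = 0 then d (vs ! 0)
      else if m = 1 then d (eta (br (vs ! 0) (vs ! 1))) + eta (d (br (vs ! 0) (vs ! 1)))
      else sc (of_int ((-1) ^ Suc m))
             (\<Sum>\<sigma>\<in>shuffles m (Suc m).
                sc (of_int (sign \<sigma> * koszul ks \<sigma>))
                   (eta (br (kmu sc d br eta m (psub ks \<sigma> 0 m) (psub vs \<sigma> 0 m)) (vs ! \<sigma> m)))))"

definition kur_mu where
  "kur_mu sc d br eta = (\<lambda>ks vs. kmu sc d br eta (length vs) ks vs)"

definition kuranishi :: "('v \<Rightarrow> 'v \<Rightarrow> 'v) \<Rightarrow> ('v \<Rightarrow> 'v) \<Rightarrow> int list \<Rightarrow> 'v::ab_group_add list \<Rightarrow> 'v" where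
  "kuranishi br eta ks vs = (if length vs = 1 then vs ! 0
      else if length vs = 2 then eta (br (vs ! 0) (vs ! 1)) else 0)"

definition dab :: "('v \<Rightarrow> 'v) \<Rightarrow> int list \<Rightarrow> 'v::ab_group_add list \<Rightarrow> 'v" where
  "dab d ks vs = (if length vs = 1 then d (vs ! 0) else 0)"

definition homog :: "(int \<Rightarrow> 'v set) \<Rightarrow> int list \<Rightarrow> 'v list \<Rightarrow> bool" where
  "homog V ks vs \<longleftrightarrow> length ks = length vs \<and> (\<forall>j < length vs. vs ! j \<in> V (ks ! j))"

definition swapadj :: "'a list \<Rightarrow> nat \<Rightarrow> 'a list" where
  "swapadj xs j = xs[j := xs ! Suc j, Suc j := xs ! j]"

definition graded_multilin :: "('k::field \<Rightarrow> 'v::ab_group_add \<Rightarrow> 'v) \<Rightarrow> (int \<Rightarrow> 'v set) \<Rightarrow> (int \<Rightarrow> 'v set)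
     \<Rightarrow> (nat \<Rightarrow> int) \<Rightarrow> (int list \<Rightarrow> 'v list \<Rightarrow> 'v) \<Rightarrow> bool" where
  "graded_multilin sc V W r f \<longleftrightarrow> (\<forall>ks vs. homog V ks vs \<and> 1 \<le> length vs \<longrightarrow>
       f ks vs \<in> W (sum_list ks + r (length vs))
     \<and> (\<forall>j < length vs. \<forall>x \<in> V (ks ! j). \<forall>y \<in> V (ks ! j).
          f ks (vs[j := x + y]) = f ks (vs[j := x]) + f ks (vs[j := y]))
     \<and> (\<forall>j < length vs. \<forall>c. \<forall>x \<in> V (ks ! j).
          f ks (vs[j := sc c x]) = sc c (f ks (vs[j := x])))
     \<and> (\<forall>j. Suc j < length vs \<longrightarrow>
          f (swapadj ks j) (swapadj vs j) = - sc (of_int (ksign (ks ! j) (ks ! Suc j))) (f ks vs)))"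

text \<open>The general shape of the sums in the L-infinity relations: for an outer map G
 and inner brackets mu,
 sum_{k+l=n+1} sum_{sigma in Sh(k,n)} (-1)^(sigma~ + k(l-1)) e(sigma)
    G_l(mu_k(v_sigma(1..k)), v_sigma(k+1..n)).\<close>
definition linf_sum :: "('k::field \<Rightarrow> 'v::ab_group_add \<Rightarrow> 'v) \<Rightarrow> (int list \<Rightarrow> 'v list \<Rightarrow> 'v)
     \<Rightarrow> (int list \<Rightarrow> 'v list \<Rightarrow> 'v) \<Rightarrow> int list \<Rightarrow> 'v list \<Rightarrow> 'v" where
  "linf_sum sc G mu ks vs = (let n = length vs in
     (\<Sum>k\<in>{1..n}. \<Sum>\<sigma>\<in>shuffles k n.
        sc (of_int (sign \<sigma> * (-1) ^ (k * (n - k)) * koszul ks \<sigma>))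
          (G ((sum_list (psub ks \<sigma> 0 k) + 2 - int k) # psub ks \<sigma> k n)
             (mu (psub ks \<sigma> 0 k) (psub vs \<sigma> 0 k) # psub vs \<sigma> k n))))"

definition Linf_algebra :: "('k::field \<Rightarrow> 'v::ab_group_add \<Rightarrow> 'v) \<Rightarrow> (int \<Rightarrow> 'v set)
     \<Rightarrow> (int list \<Rightarrow> 'v list \<Rightarrow> 'v) \<Rightarrow> bool" where
  "Linf_algebra sc V mu \<longleftrightarrow> graded_vs sc V
     \<and> graded_multilin sc V V (\<lambda>k. 2 - int k) mu
     \<and> (\<forall>ks vs. homog V ks vs \<and> 1 \<le> length vs \<longrightarrow> linf_sum sc mu mu ks vs = 0)"

definition Linf_morphism_dab :: "('k::field \<Rightarrow> 'v::ab_group_add \<Rightarrow> 'v) \<Rightarrow> (int \<Rightarrow> 'v set)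
     \<Rightarrow> (int list \<Rightarrow> 'v list \<Rightarrow> 'v) \<Rightarrow> (int \<Rightarrow> 'v set) \<Rightarrow> ('v \<Rightarrow> 'v)
     \<Rightarrow> (int list \<Rightarrow> 'v list \<Rightarrow> 'v) \<Rightarrow> bool" where
  "Linf_morphism_dab sc V mu W d' F \<longleftrightarrow> Linf_algebra sc V mu \<and> Linf_algebra sc W (dab d')
     \<and> graded_multilin sc V W (\<lambda>n. 1 - int n) F
     \<and> (\<forall>ks vs. homog V ks vs \<and> 1 \<le> length vs \<longrightarrow> d' (F ks vs) = linf_sum sc F mu ks vs)"

definition Linf_iso_dab :: "('k::field \<Rightarrow> 'v::ab_group_add \<Rightarrow> 'v) \<Rightarrow> (int \<Rightarrow> 'v set)
     \<Rightarrow> (int list \<Rightarrow> 'v list \<Rightarrow> 'v) \<Rightarrow> (int \<Rightarrow> 'v set) \<Rightarrow> ('v \<Rightarrow> 'v)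
     \<Rightarrow> (int list \<Rightarrow> 'v list \<Rightarrow> 'v) \<Rightarrow> bool" where
  "Linf_iso_dab sc V mu W d' F \<longleftrightarrow> Linf_morphism_dab sc V mu W d' F
     \<and> (\<forall>i. bij_betw (\<lambda>v. F [i] [v]) (V i) (W i))"

end

theory Submission
  imports Defs
begin

definition neg1 :: "int \<Rightarrow> int" where "neg1 z = (if even z then 1 else -1)"

lemma neg1_add: "neg1 (a+b) = neg1 a * neg1 b"
  by (auto simp: neg1_def)

lemma neg1_0[simp]: "neg1 0 = 1" by (simp add: neg1_def)
lemma neg1_1[simp]: "neg1 1 = -1" by (simp add: neg1_def)

lemma ksign_neg1: "ksign a b = neg1 (a*b)"
  by (auto simp: ksign_def neg1_def)

lemma pow_neg1: "(-1::int)^n = neg1 (int n)"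
  by (induction n) (auto simp: neg1_def)

lemma prod_neg1: "(\<Prod>x\<in>A. neg1 (f x)) = neg1 (\<Sum>x\<in>A. f x)"
proof (cases "finite A")
  case True then show ?thesis
    by (induction A rule: finite_induct) (auto simp: neg1_add)
qed simp

lemma neg1_cong: "even (a - b) \<Longrightarrow> neg1 a = neg1 b"
  by (auto simp: neg1_def)

definition invs :: "(nat \<Rightarrow> nat) \<Rightarrow> nat \<Rightarrow> (nat \<times> nat) set" where
  "invs p n = {(i,j). i<j \<and> j<n \<and> p j < p i}"

lemma finite_invs[simp]: "finite (invs p n)"
  by (rule finite_subset[of _ "{..<n} \<times> {..<n}"]) (auto simp: invs_def)

lemma noinv_id:
  assumes p: "p permutes {..<n}" and e: "invs p n = {}"
  shows "p = id"
proof -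
  have inj: "inj_on p {..<n}" using p by (meson permutes_inj_on)
  have lt: "p i < p j" if "i < j" "j < n" for i j
  proof -
    have "p i \<noteq> p j" using inj that by (auto simp: inj_on_def)
    moreover have "\<not> p j < p i" using e that by (auto simp: invs_def)
    ultimately show ?thesis by simp
  qed
  have "sorted_wrt (<) (map p [0..<n])"
    by (auto simp: sorted_wrt_iff_nth_less intro!: lt)
  moreover have "set (map p [0..<n]) = {..<n}"
    using permutes_image[OF p] by (auto simp: atLeast0LessThan)
  ultimately have "sorted_list_of_set {..<n} = map p [0..<n]"
    by (subst sorted_list_of_set_unique[symmetric]) auto
  hence "map p [0..<n] = [0..<n]" by (simp add: lessThan_atLeast0)
  hence "p i = i" if "i < n" for i using that
    by (metis add_0 diff_zero length_upt nth_map nth_upt)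
  moreover have "p i = i" if "\<not> i < n" for i using p that by (simp add: permutes_not_in)
  ultimately show ?thesis by (auto simp: fun_eq_iff)
qed

lemma adj_descent:
  assumes "invs p n \<noteq> {}"
  shows "\<exists>a. Suc a < n \<and> p (Suc a) < p a"
proof (rule ccontr)
  assume "\<not> ?thesis"
  hence "sorted (map p [0..<n])"
    unfolding sorted_iff_nth_Suc by (auto simp: not_less) (metis Suc_lessD leD nat_less_le)
  hence "p i \<le> p j" if "i \<le> j" "j < n" for i j
    using that by (auto simp: sorted_iff_nth_mono)
  thus False using assms by (auto simp: invs_def) (meson leD less_imp_le)
qed

lemma invs_step:
  assumes a: "Suc a < n" "p (Suc a) < p a"
  defines "\<tau> \<equiv> Transposition.transpose a (Suc a)"
  shows "card (invs (p \<circ> \<tau>) n) = card (invs p n) - 1"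
    and "(a, Suc a) \<in> invs p n"
proof -
  show A: "(a, Suc a) \<in> invs p n" using a by (auto simp: invs_def)
  define f where "f = (\<lambda>(i::nat,j::nat). (\<tau> i, \<tau> j))"
  have ord: "\<tau> i < \<tau> j" if "i < j" "(i,j) \<noteq> (a, Suc a)" for i j
    using that unfolding \<tau>_def transpose_def by auto
  have rng: "\<tau> j < n" if "j < n" for j using that a unfolding \<tau>_def transpose_def by auto
  have ff: "f (f x) = x" for x by (cases x) (simp add: f_def \<tau>_def)
  have 1: "f x \<in> invs p n - {(a, Suc a)}" if "x \<in> invs (p \<circ> \<tau>) n" for x
  proof -
    obtain i j where x: "x = (i,j)" by (cases x)
    have ij: "i < j" "j < n" "p (\<tau> j) < p (\<tau> i)" using that x by (auto simp: invs_def)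
    have ne: "(i,j) \<noteq> (a, Suc a)" using ij a by (auto simp: \<tau>_def)
    have "(\<tau> i, \<tau> j) \<noteq> (a, Suc a)"
    proof
      assume "(\<tau> i, \<tau> j) = (a, Suc a)"
      hence "i = Suc a" "j = a" unfolding \<tau>_def transpose_def by (auto split: if_splits)
      with ij show False by simp
    qed
    thus ?thesis using ij ord[OF ij(1) ne] rng[OF ij(2)] by (simp add: x f_def invs_def)
  qed
  have 2: "f x \<in> invs (p \<circ> \<tau>) n" if "x \<in> invs p n - {(a, Suc a)}" for x
  proof -
    obtain i j where x: "x = (i,j)" by (cases x)
    have ij: "i < j" "j < n" "p j < p i" "(i,j) \<noteq> (a, Suc a)" using that x by (auto simp: invs_def)
    have "\<tau> (\<tau> i) = i" "\<tau> (\<tau> j) = j" by (simp_all add: \<tau>_def)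
    thus ?thesis using ij ord[OF ij(1) ij(4)] rng[OF ij(2)] by (simp add: x f_def invs_def)
  qed
  have "bij_betw f (invs (p \<circ> \<tau>) n) (invs p n - {(a, Suc a)})"
    by (rule bij_betw_byWitness[where f'=f]) (use 1 2 ff in \<open>auto intro!: image_subsetI\<close>)
  hence "card (invs (p \<circ> \<tau>) n) = card (invs p n - {(a, Suc a)})"
    by (rule bij_betw_same_card)
  also have "\<dots> = card (invs p n) - 1" using A by simp
  finally show "card (invs (p \<circ> \<tau>) n) = card (invs p n) - 1" .
qed

lemma sign_invs:
  assumes "p permutes {..<n}"
  shows "sign p = neg1 (int (card (invs p n)))"
  using assms
proof (induction "card (invs p n)" arbitrary: p)
  case 0
  hence "invs p n = {}" by simp
  hence "p = id" using noinv_id[OF 0(2)] by blast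
  thus ?case using 0 by simp
next
  case (Suc c)
  hence "invs p n \<noteq> {}" by auto
  then obtain a where a: "Suc a < n" "p (Suc a) < p a" using adj_descent by blast
  define \<tau> where "\<tau> = Transposition.transpose a (Suc a)"
  have tp: "\<tau> permutes {..<n}" using a by (simp add: \<tau>_def permutes_swap_id)
  have q: "(p \<circ> \<tau>) permutes {..<n}" using Suc.prems tp by (simp add: permutes_compose)
  have c: "card (invs (p \<circ> \<tau>) n) = c" using invs_step[OF a] Suc.hyps(2) by (simp add: \<tau>_def)
  have IH: "sign (p \<circ> \<tau>) = neg1 (int c)" using Suc.hyps(1)[OF c[symmetric] q] c by simp
  have "sign (p \<circ> \<tau>) = sign p * sign \<tau>"
    by (rule sign_compose) (use Suc.prems tp in \<open>auto intro: permutes_imp_permutation\<close>)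
  also have "sign \<tau> = -1" by (simp add: \<tau>_def sign_swap_id)
  finally have "sign (p \<circ> \<tau>) = - sign p" by (simp add: o_def)
  hence "sign p = - neg1 (int c)" using IH by simp
  thus ?case using Suc.hyps(2)[symmetric] by (simp add: neg1_def)
qed


definition pm :: "int \<Rightarrow> 'v::ab_group_add \<Rightarrow> 'v" where
  "pm z x = (if even z then x else - x)"

lemma pm_add: "pm (a+b) x = pm a (pm b x)" by (auto simp: pm_def)
lemma pm_cong: "even (a-b) \<Longrightarrow> pm a x = pm b x"
  by (auto simp: pm_def)
lemma pm_0[simp]: "pm 0 x = x" by (simp add: pm_def)
lemma pm_1[simp]: "pm 1 x = - x" by (simp add: pm_def)
lemma pm_plus: "pm z (x+y) = pm z x + pm z y" by (simp add: pm_def)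
lemma pm_uminus: "pm z (- x) = - pm z x" by (simp add: pm_def)
lemma pm_zero[simp]: "pm z 0 = 0" by (simp add: pm_def)
lemma pm_pm: "pm a (pm b x) = pm (a+b) x" by (simp add: pm_add)
lemma pm_sum: "pm z (sum f A) = (\<Sum>i\<in>A. pm z (f i))"
  by (simp add: pm_def sum_negf)
lemma pm_eq_neg: "pm z x = - pm (z + 1) x" by (simp add: pm_def)
lemma pm_fun: "(\<And>y. f (- y) = - f y) \<Longrightarrow> f (pm z x) = pm z (f x)"
  by (simp add: pm_def)

lemma vs_neg1: "vector_space sc \<Longrightarrow> sc (of_int (neg1 z)) x = pm z x"
  using module.scale_minus_left[of sc] module.scale_one[of sc] module_iff_vector_space[of sc]
  by (simp add: neg1_def pm_def)

definition subs :: "nat \<Rightarrow> nat \<Rightarrow> nat set set" where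
  "subs n k = {S. S \<subseteq> {..<n} \<and> card S = k}"

definition sel :: "'a list \<Rightarrow> nat set \<Rightarrow> 'a list" where
  "sel xs S = map ((!) xs) (sorted_list_of_set S)"

definition epsS :: "int list \<Rightarrow> nat set \<Rightarrow> int" where
  "epsS ks S = (\<Sum>(i,j)\<in>{(i,j). i<j \<and> j<length ks \<and> i\<notin>S \<and> j\<in>S}. 1 + ks!i * ks!j)"

definition shuf :: "nat \<Rightarrow> nat \<Rightarrow> nat set \<Rightarrow> nat \<Rightarrow> nat" where
  "shuf n k S i = (if i < k then sorted_list_of_set S ! i
      else if i < n then sorted_list_of_set ({..<n} - S) ! (i - k) else i)"

lemma shufflesD:
  assumes "\<sigma> \<in> shuffles k n"
  shows "\<sigma> permutes {..<n}" "\<And>i j. i < j \<Longrightarrow> j < k \<Longrightarrow> \<sigma> i < \<sigma> j"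
    "\<And>i j. k \<le> i \<Longrightarrow> i < j \<Longrightarrow> j < n \<Longrightarrow> \<sigma> i < \<sigma> j"
  using assms by (auto simp: shuffles_def)

lemma sorted_map_upt:
  assumes "\<And>i j. a \<le> i \<Longrightarrow> i < j \<Longrightarrow> j < b \<Longrightarrow> f i < f j"
  shows "map f [a..<b] = sorted_list_of_set (f ` {a..<b})"
proof -
  have inj: "inj_on f {a..<b}"
    by (rule inj_onI) (metis assms atLeastLessThan_iff linorder_neqE_nat order.asym)
  have sw: "sorted_wrt (<) (map f [a..<b])"
    unfolding sorted_wrt_iff_nth_less by (auto intro!: assms)
  have "sorted_list_of_set (f ` {a..<b}) = map f [a..<b]"
    by (subst sorted_list_of_set_unique[symmetric]) (use sw card_image[OF inj] in auto)
  thus ?thesis by simp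
qed

lemma shuffle_lists:
  assumes s: "\<sigma> \<in> shuffles k n" and kn: "k \<le> n"
  shows "map \<sigma> [0..<k] = sorted_list_of_set (\<sigma>`{..<k})"
    and "map \<sigma> [k..<n] = sorted_list_of_set ({..<n} - \<sigma>`{..<k})"
proof -
  have p: "\<sigma> permutes {..<n}" by (rule shufflesD[OF s])
  have inj: "inj_on \<sigma> {..<n}" using p by (meson permutes_inj_on)
  have img: "\<sigma> ` {..<n} = {..<n}" using p by (rule permutes_image)
  show "map \<sigma> [0..<k] = sorted_list_of_set (\<sigma>`{..<k})"
    using sorted_map_upt[of 0 k \<sigma>] shufflesD(2)[OF s] by (simp add: atLeast0LessThan)
  have e: "{..<n} - \<sigma>`{..<k} = \<sigma> ` {k..<n}"
  proof -
    have u: "{..<n} = {..<k} \<union> {k..<n}" using kn by auto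
    have "\<sigma>`{..<k} \<inter> \<sigma>`{k..<n} = {}"
    proof (rule ccontr)
      assume "\<sigma>`{..<k} \<inter> \<sigma>`{k..<n} \<noteq> {}"
      then obtain a b where ab: "a < k" "k \<le> b" "b < n" "\<sigma> a = \<sigma> b" by auto
      have "a = b" using inj_onD[OF inj ab(4)] ab kn by simp
      thus False using ab by simp
    qed
    moreover have "\<sigma>`{..<n} = \<sigma>`{..<k} \<union> \<sigma>`{k..<n}" using u by (metis image_Un)
    ultimately show ?thesis using img by auto
  qed
  show "map \<sigma> [k..<n] = sorted_list_of_set ({..<n} - \<sigma>`{..<k})"
    unfolding e using sorted_map_upt[of k n \<sigma>] shufflesD(3)[OF s] by simp
qed

lemma shuffle_eq_shuf:
  assumes s: "\<sigma> \<in> shuffles k n" and kn: "k \<le> n"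
  shows "\<sigma> = shuf n k (\<sigma>`{..<k})"
proof
  fix i
  show "\<sigma> i = shuf n k (\<sigma>`{..<k}) i"
  proof (cases "i < k")
    case True
    thus ?thesis using arg_cong[OF shuffle_lists(1)[OF s kn], of "\<lambda>l. l ! i"]
      by (simp add: shuf_def)
  next
    case False
    show ?thesis
    proof (cases "i < n")
      case True
      thus ?thesis using False arg_cong[OF shuffle_lists(2)[OF s kn], of "\<lambda>l. l ! (i-k)"]
        by (simp add: shuf_def)
    next
      case F2: False
      thus ?thesis using False shufflesD(1)[OF s] by (simp add: shuf_def permutes_not_in)
    qed
  qed
qed

lemma subs_finite: "S \<in> subs n k \<Longrightarrow> finite S"
  by (auto simp: subs_def intro: finite_subset)

lemma shuf_list:
  assumes S: "S \<in> subs n k"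
  shows "map (shuf n k S) [0..<n] = sorted_list_of_set S @ sorted_list_of_set ({..<n} - S)"
    and "k \<le> n"
proof -
  have f: "finite S" using S by (rule subs_finite)
  have c: "card S = k" "S \<subseteq> {..<n}" using S by (auto simp: subs_def)
  show kn: "k \<le> n" using card_mono[OF _ c(2)] c by simp
  have c2: "card ({..<n} - S) = n - k" using c by (simp add: card_Diff_subset f)
  show "map (shuf n k S) [0..<n] = sorted_list_of_set S @ sorted_list_of_set ({..<n} - S)"
    by (rule nth_equalityI) (use c c2 kn in \<open>auto simp: shuf_def nth_append\<close>)
qed

lemma shuf_props:
  assumes S: "S \<in> subs n k"
  shows "shuf n k S \<in> shuffles k n" and "shuf n k S ` {..<k} = S"
proof -
  have f: "finite S" using S by (rule subs_finite)
  have c: "card S = k" "S \<subseteq> {..<n}" using S by (auto simp: subs_def)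
  have kn: "k \<le> n" using shuf_list(2)[OF S] .
  define L where "L = sorted_list_of_set S @ sorted_list_of_set ({..<n} - S)"
  have dL: "distinct L" "set L = {..<n}" "length L = n"
    using f c kn by (auto simp: L_def card_Diff_subset)
  have eq: "shuf n k S i = L ! i" if "i < n" for i
    using arg_cong[OF shuf_list(1)[OF S], of "\<lambda>l. l ! i"] that by (simp add: L_def)
  have "bij_betw ((!) L) {..<n} {..<n}" by (rule bij_betw_nth) (use dL in auto)
  hence "bij_betw (shuf n k S) {..<n} {..<n}"
    by (rule bij_betw_cong[THEN iffD1, rotated]) (simp add: eq)
  hence p: "shuf n k S permutes {..<n}"
    by (rule bij_imp_permutes) (use kn in \<open>simp add: shuf_def\<close>)
  have s1: "sorted_wrt (<) (sorted_list_of_set S)" by simp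
  have s2: "sorted_wrt (<) (sorted_list_of_set ({..<n} - S))" by simp
  have l1: "length (sorted_list_of_set S) = k" using c by simp
  have l2: "length (sorted_list_of_set ({..<n} - S)) = n - k" using c f by (simp add: card_Diff_subset)
  show "shuf n k S \<in> shuffles k n"
    unfolding shuffles_def
  proof (intro CollectI conjI allI impI p)
    fix i j assume "i < j \<and> j < k"
    thus "shuf n k S i < shuf n k S j" using sorted_wrt_nth_less[OF s1, of i j] l1
      by (simp add: shuf_def)
  next
    fix i j assume a: "k \<le> i \<and> i < j \<and> j < n"
    have "i - k < j - k" "j - k < n - k" using a by auto
    thus "shuf n k S i < shuf n k S j" using sorted_wrt_nth_less[OF s2, of "i-k" "j-k"] l2 a
      by (simp add: shuf_def)
  qed
  show "shuf n k S ` {..<k} = S"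
  proof -
    have "shuf n k S ` {..<k} = (\<lambda>i. sorted_list_of_set S ! i) ` {..<length (sorted_list_of_set S)}"
      using l1 by (auto simp: shuf_def)
    also have "\<dots> = set (sorted_list_of_set S)" by (auto simp: set_conv_nth)
    finally show ?thesis using f by simp
  qed
qed

lemma bij_shuf: "k \<le> n \<Longrightarrow> bij_betw (shuf n k) (subs n k) (shuffles k n)"
proof (rule bij_betw_imageI)
  assume kn: "k \<le> n"
  show "inj_on (shuf n k) (subs n k)"
    by (rule inj_onI) (metis shuf_props(2))
  show "shuf n k ` subs n k = shuffles k n"
  proof (intro equalityI subsetI)
    fix \<sigma> assume "\<sigma> \<in> shuf n k ` subs n k"
    thus "\<sigma> \<in> shuffles k n" using shuf_props(1) by blast
  next
    fix \<sigma> assume s: "\<sigma> \<in> shuffles k n"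
    have p: "\<sigma> permutes {..<n}" by (rule shufflesD[OF s])
    have inj: "inj_on \<sigma> {..<k}" using permutes_inj_on[OF p] kn by (auto intro: inj_on_subset)
    have "\<sigma>`{..<k} \<in> subs n k"
      using permutes_image[OF p] kn card_image[OF inj] by (auto simp: subs_def)
    thus "\<sigma> \<in> shuf n k ` subs n k" using shuffle_eq_shuf[OF s kn] by blast
  qed
qed

lemma sum_shuffles:
  "k \<le> n \<Longrightarrow> (\<Sum>\<sigma>\<in>shuffles k n. f \<sigma>) = (\<Sum>S\<in>subs n k. f (shuf n k S))"
  by (rule sum.reindex_bij_betw[symmetric]) (rule bij_shuf)

lemma psub_shuf:
  assumes S: "S \<in> subs n k"
  shows "psub xs (shuf n k S) 0 k = sel xs S"
    and "psub xs (shuf n k S) k n = sel xs ({..<n} - S)"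
proof -
  have kn: "k \<le> n" by (rule shuf_list(2)[OF S])
  have s: "shuf n k S \<in> shuffles k n" by (rule shuf_props(1)[OF S])
  note L = shuffle_lists[OF s kn, unfolded shuf_props(2)[OF S]]
  show "psub xs (shuf n k S) 0 k = sel xs S"
    using arg_cong[OF L(1), of "map ((!) xs)"] by (simp add: psub_def sel_def o_def)
  show "psub xs (shuf n k S) k n = sel xs ({..<n} - S)"
    using arg_cong[OF L(2), of "map ((!) xs)"] by (simp add: psub_def sel_def o_def)
qed

lemma inv_pairs_bij:
  assumes s: "\<sigma> \<in> shuffles k n" and kn: "k \<le> n"
  shows "bij_betw (\<lambda>(a,b). (\<sigma> b, \<sigma> a)) (invs \<sigma> n)
           {(i,j). i<j \<and> j<n \<and> i\<notin>\<sigma>`{..<k} \<and> j\<in>\<sigma>`{..<k}}"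
proof -
  have p: "\<sigma> permutes {..<n}" by (rule shufflesD[OF s])
  have inj: "inj_on \<sigma> {..<n}" using p by (meson permutes_inj_on)
  have img: "\<sigma> ` {..<n} = {..<n}" using p by (rule permutes_image)
  define S where "S = \<sigma>`{..<k}"
  define P where "P = {(i,j). i<j \<and> j<n \<and> i\<notin>S \<and> j\<in>S}"
  define g where "g = (\<lambda>(i,j). (inv_into {..<n} \<sigma> j, inv_into {..<n} \<sigma> i))"
  have 1: "(\<lambda>(a,b). (\<sigma> b, \<sigma> a)) x \<in> P \<and> g ((\<lambda>(a,b). (\<sigma> b, \<sigma> a)) x) = x"
    if x: "x \<in> invs \<sigma> n" for x
  proof -
    obtain a b where ab: "x = (a,b)" by (cases x)
    have h: "a < b" "b < n" "\<sigma> b < \<sigma> a" using x ab by (auto simp: invs_def)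
    have ak: "a < k"
    proof (rule ccontr)
      assume "\<not> a < k" thus False using shufflesD(3)[OF s, of a b] h by simp
    qed
    have bk: "\<not> b < k"
    proof
      assume "b < k" thus False using shufflesD(2)[OF s, of a b] h by simp
    qed
    have "\<sigma> b \<notin> S"
    proof
      assume "\<sigma> b \<in> S"
      then obtain c where c: "c < k" "\<sigma> b = \<sigma> c" by (auto simp: S_def)
      have "b = c" using inj_onD[OF inj c(2)] c(1) h(2) kn by simp
      thus False using bk c by simp
    qed
    moreover have "\<sigma> a \<in> S" using ak by (simp add: S_def)
    moreover have "\<sigma> a < n" using h img by auto
    moreover have "g (\<sigma> b, \<sigma> a) = (a, b)" using h inj by (simp add: g_def)
    ultimately show ?thesis using h ab by (simp add: P_def)
  qed
  have 2: "g y \<in> invs \<sigma> n \<and> (\<lambda>(a,b). (\<sigma> b, \<sigma> a)) (g y) = y" if y: "y \<in> P" for y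
  proof -
    obtain i j where ij: "y = (i,j)" by (cases y)
    have h: "i < j" "j < n" "i \<notin> S" "j \<in> S" using y ij by (auto simp: P_def)
    obtain a where a: "a < k" "\<sigma> a = j" using h by (auto simp: S_def)
    have "i \<in> \<sigma>`{..<n}" using h img by auto
    then obtain b where b: "b < n" "\<sigma> b = i" by auto
    have bk: "\<not> b < k" using b h by (auto simp: S_def)
    have ia: "inv_into {..<n} \<sigma> j = a" "inv_into {..<n} \<sigma> i = b"
      using a b inj kn by (auto intro: inv_into_f_f)
    have "a < b" using a bk by simp
    thus ?thesis using ia a b h ij by (simp add: invs_def g_def)
  qed
  have "bij_betw (\<lambda>(a,b). (\<sigma> b, \<sigma> a)) (invs \<sigma> n) P"
    by (rule bij_betw_byWitness[where f'=g]) (use 1 2 in \<open>auto intro!: image_subsetI\<close>)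
  thus ?thesis by (simp add: P_def S_def)
qed

lemma sign_koszul_shuffle:
  assumes s: "\<sigma> \<in> shuffles k n" and kn: "k \<le> n" and len: "length ks = n"
  shows "sign \<sigma> * koszul ks \<sigma> = neg1 (epsS ks (\<sigma>`{..<k}))"
proof -
  have p: "\<sigma> permutes {..<n}" by (rule shufflesD[OF s])
  have kz: "koszul ks \<sigma> = neg1 (\<Sum>(i,j)\<in>invs \<sigma> n. ks ! \<sigma> i * ks ! \<sigma> j)"
    unfolding koszul_def ksign_neg1 invs_def len
    by (subst prod_neg1[symmetric]) (simp add: case_prod_beta)
  have "sign \<sigma> * koszul ks \<sigma> = neg1 (\<Sum>(i,j)\<in>invs \<sigma> n. 1 + ks ! \<sigma> i * ks ! \<sigma> j)"
    unfolding sign_invs[OF p] kz neg1_add[symmetric]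
    by (simp add: sum.distrib case_prod_beta)
  also have "(\<Sum>(i,j)\<in>invs \<sigma> n. 1 + ks ! \<sigma> i * ks ! \<sigma> j)
     = (\<Sum>x\<in>invs \<sigma> n. (\<lambda>(i,j). 1 + ks!i * ks!j) ((\<lambda>(a,b). (\<sigma> b, \<sigma> a)) x))"
    by (rule sum.cong) (auto simp: mult.commute)
  also have "\<dots> = (\<Sum>(i,j)\<in>{(i,j). i<j \<and> j<n \<and> i\<notin>\<sigma>`{..<k} \<and> j\<in>\<sigma>`{..<k}}. 1 + ks!i * ks!j)"
    by (rule sum.reindex_bij_betw[OF inv_pairs_bij[OF s kn]])
  finally show ?thesis by (simp add: epsS_def len)
qed

lemma sign_koszul_shuf:
  assumes S: "S \<in> subs n k" and len: "length ks = n"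
  shows "sign (shuf n k S) * koszul ks (shuf n k S) = neg1 (epsS ks S)"
  using sign_koszul_shuffle[OF shuf_props(1)[OF S] shuf_list(2)[OF S] len] shuf_props(2)[OF S]
  by simp


definition rmv :: "nat \<Rightarrow> 'a list \<Rightarrow> 'a list" where
  "rmv t xs = take t xs @ drop (Suc t) xs"

definition eT :: "int list \<Rightarrow> nat \<Rightarrow> int" where
  "eT ks t = (\<Sum>j\<in>{t<..<length ks}. 1 + ks!t * ks!j)"

lemma length_rmv[simp]: "t < length xs \<Longrightarrow> length (rmv t xs) = length xs - 1"
  by (simp add: rmv_def)

lemma nth_rmv: "t < length xs \<Longrightarrow> i < length xs - 1 \<Longrightarrow> rmv t xs ! i = xs ! (if i < t then i else Suc i)"
  by (auto simp: rmv_def nth_append min_def)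

lemma sorted_minus_single:
  assumes "t < n"
  shows "sorted_list_of_set ({..<n} - {t}) = [0..<t] @ [Suc t..<n]"
proof -
  have "sorted_list_of_set ({..<n} - {t}) = remove1 t [0..<n]"
    by (simp add: sorted_list_of_set_remove lessThan_atLeast0)
  also have "[0..<n] = [0..<t] @ t # [Suc t..<n]" using assms
    by (metis le_add1 less_imp_add_positive upt_add_eq_append upt_conv_Cons le0)
  finally show ?thesis by (simp add: remove1_append)
qed

lemma map_nth_take: "t \<le> length xs \<Longrightarrow> map ((!) xs) [0..<t] = take t xs"
  by (rule nth_equalityI) auto

lemma map_nth_drop: "map ((!) xs) [t..<length xs] = drop t xs"
  by (rule nth_equalityI) auto

lemma sel_rmv: "t < length xs \<Longrightarrow> sel xs ({..<length xs} - {t}) = rmv t xs"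
  by (simp add: sel_def sorted_minus_single map_nth_take map_nth_drop rmv_def)

lemma sel_single: "sel xs {t} = [xs ! t]"
  by (simp add: sel_def)

lemma sel_all: "sel xs {..<length xs} = xs"
  by (simp add: sel_def lessThan_atLeast0 map_nth)

lemma epsS_rmv:
  assumes "t < length ks"
  shows "epsS ks ({..<length ks} - {t}) = eT ks t"
proof -
  have "{(i,j). i<j \<and> j<length ks \<and> i\<notin>({..<length ks} - {t}) \<and> j\<in>({..<length ks} - {t})}
        = (\<lambda>j. (t,j)) ` {t<..<length ks}" by auto
  thus ?thesis unfolding epsS_def eT_def
    by (simp add: sum.reindex inj_on_def)
qed

lemma subs_n1: "subs n (n - 1) = (\<lambda>t. {..<n} - {t}) ` {..<n}" if "n \<ge> 1"
proof (intro equalityI subsetI)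
  fix S assume S: "S \<in> subs n (n-1)"
  hence f: "finite S" "S \<subseteq> {..<n}" "card S = n - 1" by (auto simp: subs_def intro: finite_subset)
  have "card ({..<n} - S) = 1" using f that by (simp add: card_Diff_subset)
  then obtain t where t: "{..<n} - S = {t}" by (auto simp: card_Suc_eq)
  hence "t < n" "S = {..<n} - {t}" using f by auto
  thus "S \<in> (\<lambda>t. {..<n} - {t}) ` {..<n}" by auto
next
  fix S assume "S \<in> (\<lambda>t. {..<n} - {t}) ` {..<n}"
  thus "S \<in> subs n (n-1)" by (auto simp: subs_def)
qed

lemma sum_subs_n1:
  assumes "n \<ge> 1"
  shows "(\<Sum>S\<in>subs n (n-1). f S) = (\<Sum>t<n. f ({..<n} - {t}))"
proof -
  have inj: "inj_on (\<lambda>t. {..<n} - {t}) {..<n}"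
  proof (rule inj_onI)
    fix x y assume "x \<in> {..<n}" "y \<in> {..<n}" "{..<n} - {x} = {..<n} - {y}"
    thus "x = y" by blast
  qed
  show ?thesis unfolding subs_n1[OF assms] using sum.reindex[OF inj, of f] by (simp add: comp_def)
qed

locale kur =
  fixes sc :: "'k::field_char_0 \<Rightarrow> 'v::ab_group_add \<Rightarrow> 'v"
    and V :: "int \<Rightarrow> 'v set"
    and d eta :: "'v \<Rightarrow> 'v"
    and br :: "'v \<Rightarrow> 'v \<Rightarrow> 'v"
  assumes dgla: "DGLA sc V d br" and etal: "graded_lin sc V (-1) eta"
begin

lemmas DG = dgla[unfolded DGLA_def]
lemma gv: "graded_vs sc V" using DG by (rule conjunct1)
lemma DG2: "graded_lin sc V 1 d" using DG by (elim conjE)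
lemma DG3: "\<forall>v. d (d v) = 0" using DG by (elim conjE)
lemma DG4: "\<forall>x. Vector_Spaces.linear sc sc (br x)" using DG by (elim conjE)
lemma DG5: "\<forall>y. Vector_Spaces.linear sc sc (\<lambda>x. br x y)" using DG by (elim conjE)
lemma DG6: "\<forall>i j x y. x \<in> V i \<longrightarrow> y \<in> V j \<longrightarrow> br x y \<in> V (i + j)" using DG by (elim conjE)
lemma DG7: "\<forall>i j x y. x \<in> V i \<longrightarrow> y \<in> V j \<longrightarrow> br x y = - sc (of_int (ksign i j)) (br y x)" using DG by (elim conjE)
lemma DG9: "\<forall>i x y. x \<in> V i \<longrightarrow> d (br x y) = br (d x) y + sc (of_int ((-1) ^ nat \<bar>i\<bar>)) (br x (d y))" using DG by (elim conjE)
lemma vs: "vector_space sc" using gv by (simp add: graded_vs_def)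
lemma md: "module sc" using vs by (simp add: module_iff_vector_space)

lemma V0[simp]: "0 \<in> V i" using gv by (simp add: graded_vs_def)
lemma Vadd: "x \<in> V i \<Longrightarrow> y \<in> V i \<Longrightarrow> x + y \<in> V i" using gv by (simp add: graded_vs_def)
lemma Vsc: "x \<in> V i \<Longrightarrow> sc c x \<in> V i" using gv by (simp add: graded_vs_def)
lemma Vneg: "x \<in> V i \<Longrightarrow> - x \<in> V i"
  using Vsc[of x i "-1"] module.scale_minus_left[OF md] module.scale_one[OF md] by simp
lemma Vpm: "x \<in> V i \<Longrightarrow> pm z x \<in> V i" by (simp add: pm_def Vneg)
lemma Vsum: "(\<And>a. a \<in> A \<Longrightarrow> f a \<in> V i) \<Longrightarrow> sum f A \<in> V i"
proof (induction A rule: infinite_finite_induct)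
  case (insert x F) thus ?case by (simp add: Vadd)
qed simp_all
lemma Veq: "x \<in> V i \<Longrightarrow> i = j \<Longrightarrow> x \<in> V j" by simp

lemma sc_neg1: "sc (of_int (neg1 z)) x = pm z x" by (rule vs_neg1[OF vs])
lemma sc_pm: "sc c (pm z x) = pm z (sc c x)"
  by (simp add: pm_def module.scale_minus_right[OF md])
lemma sc_sum: "sc c (sum f A) = (\<Sum>a\<in>A. sc c (f a))"
  by (rule module.scale_sum_right[OF md])
lemma sc_add: "sc c (x + y) = sc c x + sc c y"
  by (rule module.scale_right_distrib[OF md])

lemma hd: "module_hom sc sc d"
  by (rule module_hom_iff_linear[THEN iffD2]) (use DG2 in \<open>simp add: graded_lin_def\<close>)
lemma heta: "module_hom sc sc eta"
  by (rule module_hom_iff_linear[THEN iffD2]) (use etal in \<open>simp add: graded_lin_def\<close>)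
lemma hbr1: "module_hom sc sc (br x)"
  by (rule module_hom_iff_linear[THEN iffD2]) (rule DG4[rule_format])
lemma hbr2: "module_hom sc sc (\<lambda>x. br x y)"
  by (rule module_hom_iff_linear[THEN iffD2]) (rule DG5[rule_format])

lemma d_add: "d (x + y) = d x + d y" by (rule module_hom.add[OF hd])
lemma d_neg: "d (- x) = - d x" by (rule module_hom.neg[OF hd])
lemma d_zero[simp]: "d 0 = 0" by (rule module_hom.zero[OF hd])
lemma d_sum: "d (sum f A) = (\<Sum>a\<in>A. d (f a))" by (rule module_hom.sum[OF hd])
lemma d_sc: "d (sc c x) = sc c (d x)" by (rule module_hom.scale[OF hd])
lemma d_pm: "d (pm z x) = pm z (d x)" by (rule pm_fun) (rule d_neg)

lemma eta_add: "eta (x + y) = eta x + eta y" by (rule module_hom.add[OF heta])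
lemma eta_neg: "eta (- x) = - eta x" by (rule module_hom.neg[OF heta])
lemma eta_zero[simp]: "eta 0 = 0" by (rule module_hom.zero[OF heta])
lemma eta_sum: "eta (sum f A) = (\<Sum>a\<in>A. eta (f a))" by (rule module_hom.sum[OF heta])
lemma eta_sc: "eta (sc c x) = sc c (eta x)" by (rule module_hom.scale[OF heta])
lemma eta_pm: "eta (pm z x) = pm z (eta x)" by (rule pm_fun) (rule eta_neg)

lemma br_add_r: "br x (y + z) = br x y + br x z" by (rule module_hom.add[OF hbr1])
lemma br_neg_r: "br x (- y) = - br x y" by (rule module_hom.neg[OF hbr1])
lemma br_zero_r[simp]: "br x 0 = 0" by (rule module_hom.zero[OF hbr1])
lemma br_sum_r: "br x (sum f A) = (\<Sum>a\<in>A. br x (f a))" by (rule module_hom.sum[OF hbr1])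
lemma br_sc_r: "br x (sc c y) = sc c (br x y)" by (rule module_hom.scale[OF hbr1])
lemma br_pm_r: "br x (pm z y) = pm z (br x y)" by (rule pm_fun) (rule br_neg_r)

lemma br_add_l: "br (x + y) z = br x z + br y z" by (rule module_hom.add[OF hbr2])
lemma br_neg_l: "br (- x) y = - br x y" by (rule module_hom.neg[OF hbr2])
lemma br_zero_l[simp]: "br 0 y = 0" by (rule module_hom.zero[OF hbr2])
lemma br_sum_l: "br (sum f A) y = (\<Sum>a\<in>A. br (f a) y)" by (rule module_hom.sum[OF hbr2])
lemma br_sc_l: "br (sc c x) y = sc c (br x y)" by (rule module_hom.scale[OF hbr2])
lemma br_pm_l: "br (pm z x) y = pm z (br x y)" by (rule pm_fun[where f="\<lambda>x. br x y"]) (rule br_neg_l)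

lemma d_deg: "x \<in> V i \<Longrightarrow> d x \<in> V (i + 1)" using DG2 unfolding graded_lin_def by blast
lemma eta_deg: "x \<in> V i \<Longrightarrow> eta x \<in> V (i - 1)" using etal unfolding graded_lin_def by simp
lemma br_deg: "x \<in> V i \<Longrightarrow> y \<in> V j \<Longrightarrow> br x y \<in> V (i + j)" using DG6 by blast
lemma dd[simp]: "d (d x) = 0" using DG3 by blast

lemma br_anti: "x \<in> V i \<Longrightarrow> y \<in> V j \<Longrightarrow> br x y = pm (1 + i*j) (br y x)"
proof -
  assume "x \<in> V i" "y \<in> V j"
  hence "br x y = - sc (of_int (ksign i j)) (br y x)" using DG7 by blast
  thus "br x y = pm (1 + i*j) (br y x)" by (simp add: ksign_neg1 sc_neg1 pm_def)
qed

lemma leib: "x \<in> V i \<Longrightarrow> d (br x y) = br (d x) y + pm i (br x (d y))"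
proof -
  assume "x \<in> V i"
  hence "d (br x y) = br (d x) y + sc (of_int ((-1) ^ nat \<bar>i\<bar>)) (br x (d y))"
    using DG9 by blast
  also have "(-1::int) ^ nat \<bar>i\<bar> = neg1 i" by (simp add: pow_neg1 neg1_def)
  finally show ?thesis by (simp add: sc_neg1)
qed

abbreviation "mu \<equiv> kmu sc d br eta"

lemma mu1: "mu (Suc 0) ks vs = d (vs ! 0)" by simp
lemma mu2: "mu 2 ks vs = d (eta (br (vs!0) (vs!1))) + eta (d (br (vs!0) (vs!1)))"
  by (simp add: numeral_2_eq_2)

lemma mu_rec:
  assumes m: "2 \<le> m" and lk: "length ks = Suc m" and lv: "length vs = Suc m"
  shows "mu (Suc m) ks vs = pm (int (Suc m))
     (\<Sum>t<Suc m. pm (eT ks t) (eta (br (mu m (rmv t ks) (rmv t vs)) (vs ! t))))"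
proof -
  have m0: "m \<noteq> 0" "m \<noteq> 1" using m by auto
  have "mu (Suc m) ks vs = sc (of_int ((-1) ^ Suc m))
             (\<Sum>\<sigma>\<in>shuffles m (Suc m).
                sc (of_int (sign \<sigma> * koszul ks \<sigma>))
                   (eta (br (mu m (psub ks \<sigma> 0 m) (psub vs \<sigma> 0 m)) (vs ! \<sigma> m))))"
    using m0 by simp
  also have "\<dots> = pm (int (Suc m)) (\<Sum>S\<in>subs (Suc m) m.
                pm (epsS ks S) (eta (br (mu m (sel ks S) (sel vs S)) (vs ! shuf (Suc m) m S m))))"
  proof -
    have 1: "sc (of_int ((-1)^Suc m)) x = pm (int (Suc m)) x" for x
      by (simp only: pow_neg1 sc_neg1)
    have 2: "(\<Sum>\<sigma>\<in>shuffles m (Suc m).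
                sc (of_int (sign \<sigma> * koszul ks \<sigma>))
                   (eta (br (mu m (psub ks \<sigma> 0 m) (psub vs \<sigma> 0 m)) (vs ! \<sigma> m))))
        = (\<Sum>S\<in>subs (Suc m) m.
                pm (epsS ks S) (eta (br (mu m (sel ks S) (sel vs S)) (vs ! shuf (Suc m) m S m))))"
      unfolding sum_shuffles[OF le_SucI[OF order_refl]]
    proof (rule sum.cong[OF refl])
      fix S assume S: "S \<in> subs (Suc m) m"
      show "sc (of_int (sign (shuf (Suc m) m S) * koszul ks (shuf (Suc m) m S)))
          (eta (br (mu m (psub ks (shuf (Suc m) m S) 0 m) (psub vs (shuf (Suc m) m S) 0 m)) (vs ! shuf (Suc m) m S m)))
        = pm (epsS ks S) (eta (br (mu m (sel ks S) (sel vs S)) (vs ! shuf (Suc m) m S m)))"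
        by (simp only: sign_koszul_shuf[OF S lk] psub_shuf(1)[OF S] sc_neg1)
    qed
    show ?thesis by (simp only: 1 2)
  qed
  also have "\<dots> = pm (int (Suc m)) (\<Sum>t<Suc m. pm (eT ks t) (eta (br (mu m (rmv t ks) (rmv t vs)) (vs ! t))))"
  proof -
    have "(\<Sum>S\<in>subs (Suc m) m. pm (epsS ks S) (eta (br (mu m (sel ks S) (sel vs S)) (vs ! shuf (Suc m) m S m))))
        = (\<Sum>t<Suc m. (\<lambda>S. pm (epsS ks S) (eta (br (mu m (sel ks S) (sel vs S)) (vs ! shuf (Suc m) m S m)))) ({..<Suc m} - {t}))"
      using sum_subs_n1[of "Suc m"] by simp
    also have "\<dots> = (\<Sum>t<Suc m. pm (eT ks t) (eta (br (mu m (rmv t ks) (rmv t vs)) (vs ! t))))"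
    proof (rule sum.cong[OF refl])
      fix t assume t: "t \<in> {..<Suc m}"
      define S where "S = {..<Suc m} - {t}"
      have S: "S \<in> subs (Suc m) m" using t by (auto simp: subs_def S_def)
      have "psub vs (shuf (Suc m) m S) m (Suc m) = sel vs ({..<Suc m} - S)" by (rule psub_shuf(2)[OF S])
      also have "{..<Suc m} - S = {t}" using t by (auto simp: S_def)
      finally have "vs ! shuf (Suc m) m S m = vs ! t" by (simp add: psub_def sel_single)
      moreover have "sel ks S = rmv t ks" "sel vs S = rmv t vs" "epsS ks S = eT ks t"
        using sel_rmv[of t ks] sel_rmv[of t vs] epsS_rmv[of t ks] t lk lv by (auto simp: S_def)
      ultimately show "pm (epsS ks S) (eta (br (mu m (sel ks S) (sel vs S)) (vs ! shuf (Suc m) m S m)))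
          = pm (eT ks t) (eta (br (mu m (rmv t ks) (rmv t vs)) (vs ! t)))" by simp
    qed
    finally show ?thesis by simp
  qed
  finally show ?thesis .
qed

end

lemma length_swapadj[simp]: "length (swapadj xs j) = length xs"
  by (simp add: swapadj_def)

lemma nth_swapadj: "Suc j < length xs \<Longrightarrow> i < length xs \<Longrightarrow>
   swapadj xs j ! i = (if i = j then xs ! Suc j else if i = Suc j then xs ! j else xs ! i)"
  by (simp add: swapadj_def nth_list_update)

lemma sum_list_swapadj: "Suc j < length xs \<Longrightarrow> sum_list (swapadj xs j) = sum_list (xs :: int list)"
proof -
  assume a: "Suc j < length xs"
  have "mset (swapadj xs j) = mset xs" unfolding swapadj_def
    by (rule mset_swap) (use a in auto)
  thus ?thesis by (metis sum_mset_sum_list)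
qed

lemma sum_list_rmv: "t < length xs \<Longrightarrow> sum_list (rmv t xs) + xs ! t = sum_list (xs :: int list)"
proof -
  assume "t < length xs"
  hence "xs = take t xs @ xs ! t # drop (Suc t) xs" by (simp add: id_take_nth_drop)
  hence "sum_list xs = sum_list (take t xs) + xs ! t + sum_list (drop (Suc t) xs)"
    by (metis add.assoc sum_list.Cons sum_list_append)
  thus ?thesis by (simp add: rmv_def)
qed

lemma rmv_upd:
  assumes "t < length xs" "j < length xs"
  shows "rmv t (xs[j := z]) = (if t = j then rmv t xs else if t < j then (rmv t xs)[j - 1 := z] else (rmv t xs)[j := z])"
  by (rule nth_equalityI) (use assms in \<open>auto simp: nth_rmv nth_list_update\<close>)

lemma upd_nth_rmv: "t < length xs \<Longrightarrow> j < length xs \<Longrightarrow> t \<noteq> j \<Longrightarrow> xs[j := z] ! t = xs ! t"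
  by simp

lemma rmv_swap:
  assumes j: "Suc j < length xs" and t: "t < length xs"
  shows "t < j \<Longrightarrow> rmv t (swapadj xs j) = swapadj (rmv t xs) (j - 1)"
    and "Suc j < t \<Longrightarrow> rmv t (swapadj xs j) = swapadj (rmv t xs) j"
    and "rmv j (swapadj xs j) = rmv (Suc j) xs"
    and "rmv (Suc j) (swapadj xs j) = rmv j xs"
proof -
  show "t < j \<Longrightarrow> rmv t (swapadj xs j) = swapadj (rmv t xs) (j - 1)"
    by (rule nth_equalityI) (use j t in \<open>auto simp: nth_rmv nth_swapadj\<close>)
  show "Suc j < t \<Longrightarrow> rmv t (swapadj xs j) = swapadj (rmv t xs) j"
    by (rule nth_equalityI) (use j t in \<open>auto simp: nth_rmv nth_swapadj\<close>)
  show "rmv j (swapadj xs j) = rmv (Suc j) xs"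
    by (rule nth_equalityI) (use j t in \<open>auto simp: nth_rmv nth_swapadj not_less_less_Suc_eq\<close>)
  show "rmv (Suc j) (swapadj xs j) = rmv j xs"
    by (rule nth_equalityI) (use j t in \<open>auto simp: nth_rmv nth_swapadj not_less_less_Suc_eq\<close>)
qed

lemma homog_rmv: "homog V ks vs \<Longrightarrow> t < length vs \<Longrightarrow> homog V (rmv t ks) (rmv t vs)"
  by (auto simp: homog_def nth_rmv)

lemma homog_upd: "homog V ks vs \<Longrightarrow> j < length vs \<Longrightarrow> x \<in> V (ks ! j) \<Longrightarrow> homog V ks (vs[j := x])"
  by (auto simp: homog_def nth_list_update)

lemma homog_swap: "homog V ks vs \<Longrightarrow> Suc j < length vs \<Longrightarrow> homog V (swapadj ks j) (swapadj vs j)"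
  by (auto simp: homog_def nth_swapadj)

lemma eT_swap:
  assumes j: "Suc j < length ks" and t: "t < length ks"
  shows "t \<noteq> j \<Longrightarrow> t \<noteq> Suc j \<Longrightarrow> eT (swapadj ks j) t = eT ks t"
    and "eT (swapadj ks j) j = 1 + ks!j * ks!Suc j + eT ks (Suc j)"
    and "eT (swapadj ks j) (Suc j) + (1 + ks!j * ks!Suc j) = eT ks j"
proof -
  let ?\<tau> = "Transposition.transpose j (Suc j)"
  assume a: "t \<noteq> j" "t \<noteq> Suc j"
  have "eT (swapadj ks j) t = (\<Sum>i\<in>{t<..<length ks}. 1 + ks!t * ks!(?\<tau> i))"
    unfolding eT_def by (rule sum.cong) (use a j t in \<open>auto simp: nth_swapadj transpose_def\<close>)
  also have "\<dots> = (\<Sum>i\<in>?\<tau> ` {t<..<length ks}. 1 + ks!t * ks!i)"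
    by (subst sum.reindex) simp_all
  also have "?\<tau> ` {t<..<length ks} = {t<..<length ks}"
  proof (cases "t < j")
    case True
    hence "?\<tau> permutes {t<..<length ks}" using j by (intro permutes_swap_id) auto
    thus ?thesis by (rule permutes_image)
  next
    case False
    thus ?thesis using a by (intro transpose_image_eq) auto
  qed
  finally show "eT (swapadj ks j) t = eT ks t" by (simp add: eT_def)
next
  have s: "{j<..<length ks} = insert (Suc j) {Suc j<..<length ks}" using j by auto
  show "eT (swapadj ks j) j = 1 + ks!j * ks!Suc j + eT ks (Suc j)"
    unfolding eT_def length_swapadj s
    by (subst sum.insert) (use j in \<open>auto simp: nth_swapadj mult.commute intro!: sum.cong\<close>)
  show "eT (swapadj ks j) (Suc j) + (1 + ks!j * ks!Suc j) = eT ks j"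
    unfolding eT_def length_swapadj s
    by (subst sum.insert) (use j in \<open>auto simp: nth_swapadj intro!: sum.cong\<close>)
qed

context kur begin

lemma mu_deg:
  "homog V ks vs \<Longrightarrow> length vs = n \<Longrightarrow> 1 \<le> n \<Longrightarrow> mu n ks vs \<in> V (sum_list ks + 2 - int n)"
proof (induction n arbitrary: ks vs)
  case 0 thus ?case by simp
next
  case (Suc m)
  have lk: "length ks = Suc m" using Suc.prems by (simp add: homog_def)
  have hv: "vs ! i \<in> V (ks ! i)" if "i < Suc m" for i using Suc.prems that by (simp add: homog_def)
  consider "m = 0" | "m = 1" | "2 \<le> m" by linarith
  thus ?case
  proof cases
    case 1
    then obtain k where k: "ks = [k]" using lk by (auto simp: length_Suc_conv)
    show ?thesis using d_deg[OF hv[of 0]] 1 k by (simp add: add.commute)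
  next
    case 2
    have b: "br (vs!0) (vs!1) \<in> V (ks!0 + ks!1)" by (rule br_deg) (use hv 2 in auto)
    have "sum_list ks = ks!0 + ks!1" using lk 2
      by (cases ks; cases "tl ks") auto
    have x1: "d (eta (br (vs!0) (vs!1))) \<in> V (ks!0 + ks!1)" using d_deg[OF eta_deg[OF b]] by simp
    have x2: "eta (d (br (vs!0) (vs!1))) \<in> V (ks!0 + ks!1)" using eta_deg[OF d_deg[OF b]] by simp
    thus ?thesis using 2 mu2 Vadd[OF x1 x2] \<open>sum_list ks = _\<close>
      by (simp add: numeral_2_eq_2)
  next
    case 3
    have lv: "length vs = Suc m" using Suc.prems by simp
    show ?thesis unfolding mu_rec[OF 3 lk lv]
    proof (intro Vpm Vsum)
      fix t assume t: "t \<in> {..<Suc m}"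
      have IH: "mu m (rmv t ks) (rmv t vs) \<in> V (sum_list (rmv t ks) + 2 - int m)"
        by (rule Suc.IH) (use homog_rmv[OF Suc.prems(1)] t lv 3 in auto)
      have "eta (br (mu m (rmv t ks) (rmv t vs)) (vs ! t)) \<in> V (sum_list (rmv t ks) + 2 - int m + ks ! t - 1)"
        by (rule eta_deg, rule br_deg[OF IH hv]) (use t in auto)
      moreover have "sum_list (rmv t ks) + 2 - int m + ks ! t - 1 = sum_list ks + 2 - int (Suc m)"
        using sum_list_rmv[of t ks] t lk by simp
      ultimately show "eta (br (mu m (rmv t ks) (rmv t vs)) (vs ! t)) \<in> V (sum_list ks + 2 - int (Suc m))"
        by simp
    qed
  qed
qed

end

context kur begin

lemma lin_term:
  "pm z (eta (br M (sc a x + sc b y))) = sc a (pm z (eta (br M x))) + sc b (pm z (eta (br M y)))"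
  by (simp add: br_add_r br_sc_r eta_add eta_sc pm_plus sc_pm)

lemma lin_term2:
  assumes "M' = sc a Mx + sc b My"
  shows "pm z (eta (br M' v)) = sc a (pm z (eta (br Mx v))) + sc b (pm z (eta (br My v)))"
  using assms by (simp add: br_add_l br_sc_l eta_add eta_sc pm_plus sc_pm)

lemma mu_lin:
  "length ks = n \<Longrightarrow> length vs = n \<Longrightarrow> j < n \<Longrightarrow>
   mu n ks (vs[j := sc a x + sc b y]) = sc a (mu n ks (vs[j := x])) + sc b (mu n ks (vs[j := y]))"
proof (induction n arbitrary: ks vs j)
  case 0 thus ?case by simp
next
  case (Suc m)
  consider "m = 0" | "m = 1" | "2 \<le> m" by linarith
  thus ?case
  proof cases
    case 1
    thus ?thesis using Suc.prems by (simp add: d_add d_sc)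
  next
    case 2
    have "j = 0 \<or> j = 1" using Suc.prems 2 by auto
    thus ?thesis using Suc.prems 2
      by (auto simp: numeral_2_eq_2 d_add d_sc eta_add eta_sc br_add_l br_add_r br_sc_l br_sc_r sc_add nth_list_update add_ac)
  next
    case 3
    have lk: "length ks = Suc m" and lv: "length vs = Suc m" using Suc.prems by auto
    define T where "T = (\<lambda>w t. pm (eT ks t) (eta (br (mu m (rmv t ks) (rmv t (vs[j := w]))) (vs[j := w] ! t))))"
    have mr: "mu (Suc m) ks (vs[j := w]) = pm (int (Suc m)) (\<Sum>t<Suc m. T w t)" for w
      unfolding T_def by (rule mu_rec[OF 3 lk]) (simp add: lv)
    have tt: "T (sc a x + sc b y) t = sc a (T x t) + sc b (T y t)" if t: "t < Suc m" for t
    proof -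
      consider "t = j" | "t < j" | "j < t" by linarith
      thus ?thesis
      proof cases
        case 1
        thus ?thesis unfolding T_def using rmv_upd[of t vs j] Suc.prems t
          by (simp add: lin_term)
      next
        case 2
        have r: "rmv t (vs[j := w]) = (rmv t vs)[j - 1 := w]" for w
          using rmv_upd[of t vs j] Suc.prems t 2 by simp
        have IH: "mu m (rmv t ks) ((rmv t vs)[j - 1 := sc a x + sc b y])
             = sc a (mu m (rmv t ks) ((rmv t vs)[j - 1 := x])) + sc b (mu m (rmv t ks) ((rmv t vs)[j - 1 := y]))"
          by (rule Suc.IH) (use Suc.prems t 2 in auto)
        have vt: "vs[j := w] ! t = vs ! t" for w using 2 by simp
        show ?thesis unfolding T_def r vt using 2 Suc.prems t
          by (intro lin_term2) (rule IH)
      next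
        case 3
        have r: "rmv t (vs[j := w]) = (rmv t vs)[j := w]" for w
          using rmv_upd[of t vs j] Suc.prems t 3 by simp
        have IH: "mu m (rmv t ks) ((rmv t vs)[j := sc a x + sc b y])
             = sc a (mu m (rmv t ks) ((rmv t vs)[j := x])) + sc b (mu m (rmv t ks) ((rmv t vs)[j := y]))"
          by (rule Suc.IH) (use Suc.prems t 3 in auto)
        have vt: "vs[j := w] ! t = vs ! t" for w using 3 by simp
        show ?thesis unfolding T_def r vt using 3 Suc.prems t
          by (intro lin_term2) (rule IH)
      qed
    qed
    have "(\<Sum>t<Suc m. T (sc a x + sc b y) t) = (\<Sum>t<Suc m. sc a (T x t) + sc b (T y t))"
      by (rule sum.cong) (simp_all add: tt)
    also have "\<dots> = sc a (\<Sum>t<Suc m. T x t) + sc b (\<Sum>t<Suc m. T y t)"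
      by (simp only: sum.distrib sc_sum)
    finally have "(\<Sum>t<Suc m. T (sc a x + sc b y) t) = sc a (\<Sum>t<Suc m. T x t) + sc b (\<Sum>t<Suc m. T y t)" .
    thus ?thesis unfolding mr by (simp only: pm_plus sc_pm)
  qed
qed

lemma mu_anti:
  "homog V ks vs \<Longrightarrow> length vs = n \<Longrightarrow> Suc j < n \<Longrightarrow>
   mu n (swapadj ks j) (swapadj vs j) = pm (1 + ks!j * ks!Suc j) (mu n ks vs)"
proof (induction n arbitrary: ks vs j)
  case 0 thus ?case by simp
next
  case (Suc m)
  have lk: "length ks = Suc m" and lv: "length vs = Suc m" using Suc.prems by (auto simp: homog_def)
  have hv: "vs ! i \<in> V (ks ! i)" if "i < Suc m" for i using Suc.prems that by (simp add: homog_def)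
  consider "m = 1" | "2 \<le> m" using Suc.prems by linarith
  thus ?case
  proof cases
    case 1
    hence j: "j = 0" using Suc.prems by simp
    have e: "br (vs!1) (vs!0) = pm (1 + ks!0 * ks!1) (br (vs!0) (vs!1))"
      using br_anti[OF hv[of 1] hv[of 0]] 1 by (simp add: mult.commute)
    show ?thesis using 1 j lk lv e
      by (simp add: numeral_2_eq_2 nth_swapadj d_pm eta_pm pm_plus)
  next
    case 2
    let ?c = "1 + ks!j * ks!Suc j"
    let ?\<tau> = "Transposition.transpose j (Suc j)"
    define f where "f = (\<lambda>t. pm (eT ks t) (eta (br (mu m (rmv t ks) (rmv t vs)) (vs ! t))))"
    define f' where "f' = (\<lambda>t. pm (eT (swapadj ks j) t) (eta (br (mu m (rmv t (swapadj ks j)) (rmv t (swapadj vs j))) (swapadj vs j ! t))))"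
    have j: "Suc j < length ks" "Suc j < length vs" using Suc.prems lk lv by auto
    have ff: "f' t = pm ?c (f (?\<tau> t))" if t: "t < Suc m" for t
    proof -
      consider "t = j" | "t = Suc j" | "t \<noteq> j" "t \<noteq> Suc j" by blast
      thus ?thesis
      proof cases
        case 1
        thus ?thesis unfolding f_def f'_def
          using rmv_swap(3)[OF j(1) t[folded lk]] rmv_swap(3)[OF j(2) t[folded lv]] eT_swap(2)[OF j(1) t[folded lk]] j
          by (simp add: nth_swapadj pm_add)
      next
        case 2
        have e: "pm (eT (swapadj ks j) (Suc j)) z = pm (?c + eT ks j) z" for z :: 'v
        proof (rule pm_cong)
          have eqd: "eT (swapadj ks j) (Suc j) - (?c + eT ks j) = - 2 * ?c"
            by (subst eT_swap(3)[OF j(1) t[folded lk], symmetric]) (simp add: algebra_simps)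
          show "even (eT (swapadj ks j) (Suc j) - (?c + eT ks j))" unfolding eqd by simp
        qed
        show ?thesis unfolding f_def f'_def
          using rmv_swap(4)[OF j(1) t[folded lk]] rmv_swap(4)[OF j(2) t[folded lv]] 2 j
          by (simp add: nth_swapadj pm_add e)
      next
        case 3
        have tau: "?\<tau> t = t" using 3 by simp
        have eT': "eT (swapadj ks j) t = eT ks t" using eT_swap(1)[OF j(1) t[folded lk] 3] .
        have vt: "swapadj vs j ! t = vs ! t" using 3 t lv j by (simp add: nth_swapadj)
        have hr: "homog V (rmv t ks) (rmv t vs)" by (rule homog_rmv[OF Suc.prems(1)]) (use t lv in simp)
        consider "t < j" | "Suc j < t" using 3 by linarith
        thus ?thesis
        proof cases
          case a: 1
          have r: "rmv t (swapadj ks j) = swapadj (rmv t ks) (j - 1)" "rmv t (swapadj vs j) = swapadj (rmv t vs) (j - 1)"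
            using rmv_swap(1)[OF j(1) t[folded lk] a] rmv_swap(1)[OF j(2) t[folded lv] a] by auto
          have IH: "mu m (swapadj (rmv t ks) (j - 1)) (swapadj (rmv t vs) (j - 1))
              = pm (1 + rmv t ks ! (j - 1) * rmv t ks ! Suc (j - 1)) (mu m (rmv t ks) (rmv t vs))"
            by (rule Suc.IH[OF hr]) (use t lv a Suc.prems in auto)
          have nn: "rmv t ks ! (j - 1) = ks ! j" "rmv t ks ! Suc (j - 1) = ks ! Suc j"
            using a j t lk by (auto simp: nth_rmv)
          show ?thesis unfolding f_def f'_def tau eT' vt r IH nn
            by (simp add: br_pm_l eta_pm pm_pm add_ac)
        next
          case b: 2
          have r: "rmv t (swapadj ks j) = swapadj (rmv t ks) j" "rmv t (swapadj vs j) = swapadj (rmv t vs) j"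
            using rmv_swap(2)[OF j(1) t[folded lk] b] rmv_swap(2)[OF j(2) t[folded lv] b] by auto
          have IH: "mu m (swapadj (rmv t ks) j) (swapadj (rmv t vs) j)
              = pm (1 + rmv t ks ! j * rmv t ks ! Suc j) (mu m (rmv t ks) (rmv t vs))"
            by (rule Suc.IH[OF hr]) (use t lv b Suc.prems in auto)
          have nn: "rmv t ks ! j = ks ! j" "rmv t ks ! Suc j = ks ! Suc j"
            using b j t lk by (auto simp: nth_rmv)
          show ?thesis unfolding f_def f'_def tau eT' vt r IH nn
            by (simp add: br_pm_l eta_pm pm_pm add_ac)
        qed
      qed
    qed
    have tp: "?\<tau> permutes {..<Suc m}" using j lk by (intro permutes_swap_id) auto
    have "(\<Sum>t<Suc m. f' t) = (\<Sum>t<Suc m. pm ?c (f (?\<tau> t)))" by (rule sum.cong) (simp_all add: ff)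
    also have "\<dots> = (\<Sum>t<Suc m. pm ?c (f t))"
      by (rule sum.reindex_bij_betw[OF permutes_imp_bij[OF tp]])
    also have "\<dots> = pm ?c (\<Sum>t<Suc m. f t)" by (simp only: pm_sum)
    finally have S: "(\<Sum>t<Suc m. f' t) = pm ?c (\<Sum>t<Suc m. f t)" .
    have L: "mu (Suc m) (swapadj ks j) (swapadj vs j) = pm (int (Suc m)) (\<Sum>t<Suc m. f' t)"
      unfolding f'_def by (rule mu_rec[OF 2]) (simp_all add: lk lv)
    have R: "mu (Suc m) ks vs = pm (int (Suc m)) (\<Sum>t<Suc m. f t)"
      unfolding f_def by (rule mu_rec[OF 2 lk lv])
    show ?thesis unfolding L R S by (simp only: pm_pm add.commute)
  qed
qed

end

lemma length_sel[simp]: "finite S \<Longrightarrow> length (sel xs S) = card S"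
  by (simp add: sel_def)

lemma sel_nth: "finite T \<Longrightarrow> p < card T \<Longrightarrow> sel xs T ! p = xs ! (sorted_list_of_set T ! p)"
  by (simp add: sel_def)

lemma sum_list_sel: "finite S \<Longrightarrow> sum_list (sel ks S) = (\<Sum>j\<in>S. ks ! j)"
  by (simp add: sel_def sum_list_distinct_conv_sum_set)

lemma rmv_distinct: "distinct L \<Longrightarrow> p < length L \<Longrightarrow> rmv p L = remove1 (L ! p) L"
proof -
  assume a: "distinct L" "p < length L"
  hence L: "L = take p L @ L ! p # drop (Suc p) L" by (simp add: id_take_nth_drop)
  have "L ! p \<notin> set (take p L)"
    using a by (metis L distinct_append not_distinct_conv_prefix)
  hence "remove1 (L ! p) (take p L @ L ! p # drop (Suc p) L) = take p L @ drop (Suc p) L"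
    by (simp add: remove1_append)
  thus ?thesis using L by (simp add: rmv_def)
qed

lemma map_rmv: "p < length L \<Longrightarrow> map f (rmv p L) = rmv p (map f L)"
  by (simp add: rmv_def take_map drop_map)

lemma rmv_sel:
  assumes "finite T" "p < card T"
  shows "rmv p (sel xs T) = sel xs (T - {sorted_list_of_set T ! p})"
proof -
  have "rmv p (sorted_list_of_set T) = sorted_list_of_set (T - {sorted_list_of_set T ! p})"
    using assms by (simp add: rmv_distinct sorted_list_of_set_remove)
  thus ?thesis unfolding sel_def using assms by (metis length_sorted_list_of_set map_rmv)
qed

lemma sorted_nth_less_iff:
  assumes "finite T" "p < card T" "q < card T"
  shows "sorted_list_of_set T ! p < sorted_list_of_set T ! q \<longleftrightarrow> p < q"
proof -
  have s: "sorted_wrt (<) (sorted_list_of_set T)" by simp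
  have l: "length (sorted_list_of_set T) = card T" by simp
  show ?thesis
  proof (cases rule: linorder_cases[of p q])
    case less thus ?thesis using sorted_wrt_nth_less[OF s less] assms l by simp
  next
    case equal thus ?thesis by simp
  next
    case greater thus ?thesis using sorted_wrt_nth_less[OF s greater] assms l by simp
  qed
qed

lemma eT_sel:
  assumes f: "finite T" and p: "p < card T"
  shows "eT (sel ks T) p = (\<Sum>j\<in>{j\<in>T. sorted_list_of_set T ! p < j}. 1 + ks ! (sorted_list_of_set T ! p) * ks ! j)"
proof -
  let ?L = "sorted_list_of_set T"
  have d: "distinct ?L" "set ?L = T" "length ?L = card T" using f by auto
  have "eT (sel ks T) p = (\<Sum>q\<in>{p<..<card T}. 1 + ks ! (?L ! p) * ks ! (?L ! q))"
    unfolding eT_def using f p by (intro sum.cong) (auto simp: sel_nth)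
  also have "\<dots> = (\<Sum>j\<in>(!) ?L ` {p<..<card T}. 1 + ks ! (?L ! p) * ks ! j)"
  proof (rule sum.reindex[symmetric, unfolded comp_def])
    show "inj_on ((!) ?L) {p<..<card T}" by (rule inj_on_nth) (use d in auto)
  qed
  also have "(!) ?L ` {p<..<card T} = {j\<in>T. ?L ! p < j}"
  proof (intro equalityI subsetI)
    fix j assume "j \<in> (!) ?L ` {p<..<card T}"
    then obtain q where q: "p < q" "q < card T" "j = ?L ! q" by auto
    have "j \<in> T" using q d by (metis nth_mem)
    moreover have "?L ! p < j" using q sorted_nth_less_iff[OF f p q(2)] by simp
    ultimately show "j \<in> {j\<in>T. ?L ! p < j}" by simp
  next
    fix j assume j: "j \<in> {j\<in>T. ?L ! p < j}"
    have "j \<in> set ?L" using j d by simp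
    then obtain q where q: "q < card T" "j = ?L ! q" using d(3) by (metis in_set_conv_nth)
    have "p < q" using j q sorted_nth_less_iff[OF f p q(1)] by simp
    thus "j \<in> (!) ?L ` {p<..<card T}" using q by auto
  qed
  finally show ?thesis .
qed

definition emb :: "nat \<Rightarrow> nat \<Rightarrow> nat" where "emb t i = (if i < t then i else Suc i)"

lemma emb_mono: "i < j \<Longrightarrow> emb t i < emb t j" by (simp add: emb_def)
lemma emb_inj: "inj (emb t)" by (auto simp: inj_def emb_def split: if_splits)
lemma emb_ne[simp]: "emb t i \<noteq> t" by (simp add: emb_def)
lemma emb_ne2[simp]: "t \<noteq> emb t i" by (simp add: emb_def)

lemma sorted_emb:
  assumes "finite S'"
  shows "sorted_list_of_set (emb t ` S') = map (emb t) (sorted_list_of_set S')"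
proof -
  have "sorted_wrt (\<lambda>x y. emb t x < emb t y) (sorted_list_of_set S')"
    by (rule sorted_wrt_mono_rel[of _ "(<)"]) (auto intro: emb_mono)
  hence "sorted_wrt (<) (map (emb t) (sorted_list_of_set S'))"
    by (simp add: sorted_wrt_map)
  moreover have "card (emb t ` S') = card S'" by (rule card_image) (rule inj_on_subset[OF emb_inj], simp)
  ultimately show ?thesis using assms
    by (subst sorted_list_of_set_unique[symmetric]) auto
qed

lemma sel_emb:
  assumes "S' \<subseteq> {..<length xs - 1}" "t < length xs"
  shows "sel (rmv t xs) S' = sel xs (emb t ` S')"
proof -
  have f: "finite S'" using assms finite_subset by blast
  have "rmv t xs ! i = xs ! emb t i" if "i \<in> S'" for i
    using that assms by (subst nth_rmv) (auto simp: emb_def)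
  thus ?thesis unfolding sel_def sorted_emb[OF f] using f by simp
qed

lemma emb_compl:
  assumes "t < n" "S' \<subseteq> {..<n - 1}"
  shows "{..<n} - emb t ` S' - {t} = emb t ` ({..<n - 1} - S')"
proof (intro equalityI subsetI)
  fix x assume x: "x \<in> {..<n} - emb t ` S' - {t}"
  define y where "y = (if x < t then x else x - 1)"
  have "emb t y = x" "y < n - 1" using x assms by (auto simp: y_def emb_def)
  moreover have "y \<notin> S'" using x \<open>emb t y = x\<close> by auto
  ultimately show "x \<in> emb t ` ({..<n - 1} - S')" by (metis DiffI image_eqI lessThan_iff)
next
  fix x assume "x \<in> emb t ` ({..<n - 1} - S')"
  then obtain y where y: "y < n - 1" "y \<notin> S'" "x = emb t y" by auto
  have "x \<notin> emb t ` S'" using y inj_image_mem_iff[OF emb_inj] by auto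
  thus "x \<in> {..<n} - emb t ` S' - {t}" using y assms by (auto simp: emb_def)
qed

definition unemb :: "nat \<Rightarrow> nat \<Rightarrow> nat" where "unemb t i = (if i < t then i else i - 1)"

lemma unemb_emb[simp]: "unemb t (emb t i) = i" by (simp add: unemb_def emb_def)
lemma emb_unemb: "x \<noteq> t \<Longrightarrow> emb t (unemb t x) = x" unfolding unemb_def emb_def by presburger

lemma bij_emb_subs:
  assumes t: "t < n"
  shows "bij_betw (\<lambda>S'. emb t ` S') (subs (n - 1) k) {S\<in>subs n k. t \<notin> S}"
proof (rule bij_betw_byWitness[where f'="\<lambda>S. unemb t ` S"])
  show "\<forall>S'\<in>subs (n - 1) k. unemb t ` emb t ` S' = S'"
    by (simp add: image_image)
  show "\<forall>S\<in>{S \<in> subs n k. t \<notin> S}. emb t ` unemb t ` S = S"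
  proof
    fix S assume "S \<in> {S \<in> subs n k. t \<notin> S}"
    hence "t \<notin> S" by auto
    hence "\<forall>x\<in>S. emb t (unemb t x) = x" using emb_unemb by metis
    thus "emb t ` unemb t ` S = S" by (simp add: image_image)
  qed
  show "(\<lambda>S'. emb t ` S') ` subs (n - 1) k \<subseteq> {S \<in> subs n k. t \<notin> S}"
  proof
    fix S assume "S \<in> (\<lambda>S'. emb t ` S') ` subs (n - 1) k"
    then obtain S' where S': "S' \<in> subs (n-1) k" "S = emb t ` S'" by auto
    have "card (emb t ` S') = card S'" by (rule card_image) (rule inj_on_subset[OF emb_inj], simp)
    thus "S \<in> {S \<in> subs n k. t \<notin> S}" using S' t
      by (auto simp: subs_def emb_def subset_iff)
  qed
  show "(\<lambda>S. unemb t ` S) ` {S \<in> subs n k. t \<notin> S} \<subseteq> subs (n - 1) k"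
  proof
    fix S' assume "S' \<in> (\<lambda>S. unemb t ` S) ` {S \<in> subs n k. t \<notin> S}"
    then obtain S where S: "S \<in> subs n k" "t \<notin> S" "S' = unemb t ` S" by auto
    have "inj_on (unemb t) S" by (rule inj_on_inverseI[where g="emb t"]) (metis S(2) emb_unemb)
    hence "card S' = card S" using S by (simp add: card_image)
    have u: "unemb t x < n - 1" if "x \<in> S" for x
    proof -
      have "x < n" "x \<noteq> t" using S that by (auto simp: subs_def)
      thus ?thesis using t unfolding unemb_def by presburger
    qed
    show "S' \<in> subs (n - 1) k" using S u \<open>card S' = card S\<close> by (auto simp: subs_def)
  qed
qed

lemma epsS_emb:
  assumes t: "t < length ks" and S': "S' \<subseteq> {..<length ks - 1}"
  shows "epsS ks (emb t ` S') = epsS (rmv t ks) S' + (\<Sum>j\<in>{j\<in>emb t ` S'. t < j}. 1 + ks!t * ks!j)"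
proof -
  let ?n = "length ks"
  let ?S = "emb t ` S'"
  let ?P = "{(i,j). i<j \<and> j<?n \<and> i\<notin>?S \<and> j\<in>?S}"
  let ?P' = "{(i,j). i<j \<and> j<length (rmv t ks) \<and> i\<notin>S' \<and> j\<in>S'}"
  have fin: "finite ?P" by (rule finite_subset[of _ "{..<?n} \<times> {..<?n}"]) auto
  have split: "?P = (\<lambda>j. (t,j)) ` {j\<in>?S. t < j} \<union> (\<lambda>(i,j). (emb t i, emb t j)) ` ?P'"
  proof (intro equalityI subsetI)
    fix x assume x: "x \<in> ?P"
    obtain i j where ij: "x = (i,j)" by (cases x)
    show "x \<in> (\<lambda>j. (t,j)) ` {j\<in>?S. t < j} \<union> (\<lambda>(i,j). (emb t i, emb t j)) ` ?P'"
    proof (cases "i = t")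
      case True thus ?thesis using x ij by auto
    next
      case False
      obtain j' where j': "j' \<in> S'" "j = emb t j'" using x ij by auto
      define i' where "i' = unemb t i"
      have ii: "emb t i' = i" using False by (auto simp: i'_def unemb_def emb_def)
      have "i' \<notin> S'" using x ij ii by (metis (no_types, lifting) case_prodD image_eqI mem_Collect_eq)
      moreover have "i' < j'" using x ij ii j' by (metis (no_types, lifting) case_prodD emb_mono linorder_neqE_nat mem_Collect_eq order.asym)
      moreover have "j' < length (rmv t ks)" using j' S' t by auto
      ultimately have "(i', j') \<in> ?P'" using j'(1) by simp
      thus ?thesis using ij ii j' by force
    qed
  next
    fix x assume "x \<in> (\<lambda>j. (t,j)) ` {j\<in>?S. t < j} \<union> (\<lambda>(i,j). (emb t i, emb t j)) ` ?P'"
    thus "x \<in> ?P"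
    proof
      assume "x \<in> (\<lambda>j. (t,j)) ` {j\<in>?S. t < j}"
      thus ?thesis using S' t emb_ne by (auto simp: emb_def)
    next
      assume "x \<in> (\<lambda>(i,j). (emb t i, emb t j)) ` ?P'"
      then obtain i j where ij: "(i,j) \<in> ?P'" "x = (emb t i, emb t j)" by auto
      have "emb t i \<notin> ?S" using ij inj_image_mem_iff[OF emb_inj] by auto
      moreover have "emb t j < ?n" using ij t by (auto simp: emb_def)
      ultimately show ?thesis using ij emb_mono by auto
    qed
  qed
  have disj: "(\<lambda>j. (t,j)) ` {j\<in>?S. t < j} \<inter> (\<lambda>(i,j). (emb t i, emb t j)) ` ?P' = {}"
    using emb_ne by auto
  have "epsS ks ?S = (\<Sum>x\<in>(\<lambda>j. (t,j)) ` {j\<in>?S. t < j}. (\<lambda>(i,j). 1 + ks!i * ks!j) x)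
        + (\<Sum>x\<in>(\<lambda>(i,j). (emb t i, emb t j)) ` ?P'. (\<lambda>(i,j). 1 + ks!i * ks!j) x)"
    unfolding epsS_def split
    by (rule sum.union_disjoint) (use fin split disj in auto)
  also have "(\<Sum>x\<in>(\<lambda>j. (t,j)) ` {j\<in>?S. t < j}. (\<lambda>(i,j). 1 + ks!i * ks!j) x)
       = (\<Sum>j\<in>{j\<in>?S. t < j}. 1 + ks!t * ks!j)"
    by (subst sum.reindex) (auto simp: inj_on_def)
  also have "(\<Sum>x\<in>(\<lambda>(i,j). (emb t i, emb t j)) ` ?P'. (\<lambda>(i,j). 1 + ks!i * ks!j) x) = epsS (rmv t ks) S'"
  proof -
    have inj: "inj_on (\<lambda>(i,j). (emb t i, emb t j)) ?P'"
      using emb_inj by (auto simp: inj_on_def inj_def)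
    have "(\<Sum>x\<in>(\<lambda>(i,j). (emb t i, emb t j)) ` ?P'. (\<lambda>(i,j). 1 + ks!i * ks!j) x)
        = (\<Sum>x\<in>?P'. (\<lambda>(i,j). 1 + ks!emb t i * ks!emb t j) x)"
      by (subst sum.reindex[OF inj]) (simp add: case_prod_beta)
    also have "\<dots> = epsS (rmv t ks) S'" unfolding epsS_def
      by (rule sum.cong) (use t in \<open>auto simp: nth_rmv emb_def\<close>)
    finally show ?thesis .
  qed
  finally show ?thesis by simp
qed

lemma eT_split:
  assumes "t < length ks" "t \<notin> S"
  shows "eT ks t = (\<Sum>j\<in>{j\<in>S. t < j \<and> j < length ks}. 1 + ks!t * ks!j) + (\<Sum>j\<in>{j\<in>{..<length ks} - S. t < j}. 1 + ks!t * ks!j)"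
proof -
  have "{t<..<length ks} = {j\<in>S. t < j \<and> j < length ks} \<union> {j\<in>{..<length ks} - S. t < j}" by auto
  thus ?thesis unfolding eT_def by (subst sum.union_disjoint[symmetric]) auto
qed

lemma epsS_compl:
  assumes S: "S \<subseteq> {..<length ks}"
  shows "epsS ks S + epsS ks ({..<length ks} - S)
     = int (card S * card ({..<length ks} - S)) + (\<Sum>j\<in>S. ks!j) * (\<Sum>i\<in>{..<length ks} - S. ks!i)"
proof -
  let ?n = "length ks"
  let ?T = "{..<?n} - S"
  have fS: "finite S" using S finite_subset by blast
  let ?A = "{(i,j). i<j \<and> j<?n \<and> i\<notin>S \<and> j\<in>S}"
  let ?B = "{(i,j). i<j \<and> j<?n \<and> i\<notin>?T \<and> j\<in>?T}"
  have e1: "epsS ks S = (\<Sum>x\<in>?A. (\<lambda>(i,j). 1 + ks!i * ks!j) x)" by (simp add: epsS_def)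
  have e2: "epsS ks ?T = (\<Sum>x\<in>(\<lambda>(i,j). (j,i)) ` ?B. (\<lambda>(i,j). 1 + ks!i * ks!j) x)"
    unfolding epsS_def by (subst sum.reindex) (auto simp: inj_on_def mult.commute intro!: sum.cong)
  have u: "?A \<union> (\<lambda>(i,j). (j,i)) ` ?B = ?T \<times> S"
  proof (intro equalityI subsetI)
    fix x assume "x \<in> ?T \<times> S"
    then obtain i j where ij: "x = (i,j)" "i \<in> ?T" "j \<in> S" by auto
    have "j < ?n" using ij S by auto
    show "x \<in> ?A \<union> (\<lambda>(i,j). (j,i)) ` ?B"
    proof (cases "i < j")
      case True thus ?thesis using ij \<open>j < ?n\<close> by auto
    next
      case False
      hence "j < i" using ij by (metis DiffD2 linorder_neqE_nat)
      hence "(j,i) \<in> ?B" using ij by auto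
      thus ?thesis using ij by (auto simp: image_iff)
    qed
  qed auto
  have dj: "?A \<inter> (\<lambda>(i,j). (j,i)) ` ?B = {}" by auto
  have "epsS ks S + epsS ks ?T = (\<Sum>x\<in>?T \<times> S. (\<lambda>(i,j). 1 + ks!i * ks!j) x)"
    unfolding e1 e2 u[symmetric]
    by (rule sum.union_disjoint[symmetric]) (use dj in \<open>auto intro: finite_subset[of _ "{..<?n} \<times> {..<?n}"]\<close>)
  also have "\<dots> = (\<Sum>i\<in>?T. \<Sum>j\<in>S. 1 + ks!i * ks!j)"
    by (simp add: sum.cartesian_product)
  also have "\<dots> = int (card S * card ?T) + (\<Sum>j\<in>S. ks!j) * (\<Sum>i\<in>?T. ks!i)"
    by (simp add: sum.distrib sum_distrib_left sum_distrib_right mult.commute)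
  finally show ?thesis .
qed


lemma eT_cons0: "eT (c # ks) 0 = (\<Sum>p<length ks. 1 + c * ks ! p)"
proof -
  have "{0<..<Suc (length ks)} = Suc ` {..<length ks}" by (auto simp: image_iff gr0_conv_Suc)
  thus ?thesis unfolding eT_def by (simp add: sum.reindex)
qed

lemma eT_consS: "eT (c # ks) (Suc p) = eT ks p"
proof -
  have "{Suc p<..<Suc (length ks)} = Suc ` {p<..<length ks}"
    by (auto simp: image_iff) (metis Suc_lessE Suc_less_SucD greaterThanLessThan_iff)
  thus ?thesis unfolding eT_def by (simp add: sum.reindex)
qed

lemma rmv_cons0[simp]: "rmv 0 (c # xs) = xs" by (simp add: rmv_def)
lemma rmv_consS[simp]: "rmv (Suc p) (c # xs) = c # rmv p xs" by (simp add: rmv_def)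

context kur begin

lemma linf_sub:
  assumes lk: "length ks = n" and lv: "length vs = n"
  shows "linf_sum sc G M ks vs = (\<Sum>k\<in>{1..n}. \<Sum>S\<in>subs n k. pm (epsS ks S + int (k * (n - k)))
      (G ((sum_list (sel ks S) + 2 - int k) # sel ks ({..<n} - S)) (M (sel ks S) (sel vs S) # sel vs ({..<n} - S))))"
  unfolding linf_sum_def Let_def lv
proof (rule sum.cong[OF refl])
  fix k assume k: "k \<in> {1..n}"
  hence kn: "k \<le> n" by simp
  show "(\<Sum>\<sigma>\<in>shuffles k n. sc (of_int (sign \<sigma> * (- 1) ^ (k * (n - k)) * koszul ks \<sigma>))
           (G ((sum_list (psub ks \<sigma> 0 k) + 2 - int k) # psub ks \<sigma> k n) (M (psub ks \<sigma> 0 k) (psub vs \<sigma> 0 k) # psub vs \<sigma> k n))) =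
        (\<Sum>S\<in>subs n k. pm (epsS ks S + int (k * (n - k)))
           (G ((sum_list (sel ks S) + 2 - int k) # sel ks ({..<n} - S)) (M (sel ks S) (sel vs S) # sel vs ({..<n} - S))))"
    unfolding sum_shuffles[OF kn]
  proof (rule sum.cong[OF refl])
    fix S assume S: "S \<in> subs n k"
    have "sign (shuf n k S) * (- 1) ^ (k * (n - k)) * koszul ks (shuf n k S)
        = (sign (shuf n k S) * koszul ks (shuf n k S)) * (- 1) ^ (k * (n - k))"
      by (simp only: mult_ac)
    also have "\<dots> = neg1 (epsS ks S + int (k * (n - k)))"
      by (simp only: sign_koszul_shuf[OF S lk] pow_neg1 neg1_add)
    finally have e: "sign (shuf n k S) * (- 1) ^ (k * (n - k)) * koszul ks (shuf n k S) = neg1 (epsS ks S + int (k * (n - k)))" .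
    show "sc (of_int (sign (shuf n k S) * (- 1) ^ (k * (n - k)) * koszul ks (shuf n k S)))
           (G ((sum_list (psub ks (shuf n k S) 0 k) + 2 - int k) # psub ks (shuf n k S) k n)
             (M (psub ks (shuf n k S) 0 k) (psub vs (shuf n k S) 0 k) # psub vs (shuf n k S) k n)) =
          pm (epsS ks S + int (k * (n - k)))
           (G ((sum_list (sel ks S) + 2 - int k) # sel ks ({..<n} - S)) (M (sel ks S) (sel vs S) # sel vs ({..<n} - S)))"
      by (simp only: e sc_neg1 psub_shuf[OF S])
  qed
qed

definition Rs :: "nat \<Rightarrow> int list \<Rightarrow> 'v list \<Rightarrow> 'v" where
  "Rs m ks vs = (\<Sum>t<m. pm (eT ks t) (eta (br (mu (m - 1) (rmv t ks) (rmv t vs)) (vs ! t))))"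

definition DK :: "nat \<Rightarrow> 'v list \<Rightarrow> 'v" where
  "DK m vs = (if m = 2 then d (eta (br (vs ! 0) (vs ! 1))) else 0)"

lemma mu_P:
  assumes m: "2 \<le> m" and h: "homog V ks vs" and lv: "length vs = m"
  shows "mu m ks vs = DK m vs - pm (int m - 1) (Rs m ks vs)"
proof (cases "m = 2")
  case False
  define m' where "m' = m - 1"
  have m': "m = Suc m'" "2 \<le> m'" using m False by (auto simp: m'_def)
  have lk: "length ks = Suc m'" using h lv m' by (simp add: homog_def)
  have lv': "length vs = Suc m'" using lv m' by simp
  have "mu m ks vs = pm (int (Suc m')) (Rs m ks vs)"
    unfolding m'(1) Rs_def diff_Suc_1 by (rule mu_rec[OF m'(2) lk lv'])
  also have "\<dots> = - pm (int m - 1) (Rs m ks vs)"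
    by (subst pm_eq_neg) (rule arg_cong[where f=uminus], rule pm_cong, simp add: m'(1))
  finally show ?thesis using False by (simp add: DK_def)
next
  case True
  have lk: "length ks = 2" using h lv True by (simp add: homog_def)
  have hv: "vs ! i \<in> V (ks ! i)" if "i < 2" for i using h that lv True by (simp add: homog_def)
  obtain a0 a1 where va: "vs = [a0, a1]" using lv True by (metis One_nat_def length_0_conv length_Suc_conv numeral_2_eq_2)
  obtain k0 k1 where ka: "ks = [k0, k1]" using lk by (metis One_nat_def length_0_conv length_Suc_conv numeral_2_eq_2)
  have r0: "rmv 0 vs = [vs ! 1]" "rmv 1 vs = [vs ! 0]" "rmv 0 ks = [ks ! 1]" "rmv 1 ks = [ks ! 0]"
    using va ka by (simp_all add: rmv_def)
  have i1: "{0<..<2::nat} = {1}" by auto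
  have i2: "{1<..<2::nat} = {}" by auto
  have e0: "eT ks 0 = 1 + ks!0 * ks!1" and e1: "eT ks 1 = 0"
    using ka by (simp_all add: eT_def i1 i2)
  have Rs2: "Rs 2 ks vs = pm (1 + ks!0 * ks!1) (eta (br (d (vs ! 1)) (vs ! 0))) + eta (br (d (vs ! 0)) (vs ! 1))"
    unfolding Rs_def using r0 e0 e1 by (simp add: numeral_2_eq_2)
  have "d (br (vs!0) (vs!1)) = br (d (vs!0)) (vs!1) + pm (ks!0) (br (vs!0) (d (vs!1)))"
    by (rule leib[OF hv]) simp
  also have "br (vs!0) (d (vs!1)) = pm (1 + ks!0 * (ks!1 + 1)) (br (d (vs!1)) (vs!0))"
    by (rule br_anti[OF hv d_deg[OF hv]]) simp_all
  also have "pm (ks!0) (pm (1 + ks!0 * (ks!1 + 1)) (br (d (vs!1)) (vs!0))) = pm (1 + ks!0 * ks!1) (br (d (vs!1)) (vs!0))"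
    by (subst pm_pm, rule pm_cong) (simp add: algebra_simps)
  finally have "d (br (vs!0) (vs!1)) = br (d (vs!0)) (vs!1) + pm (1 + ks!0 * ks!1) (br (d (vs!1)) (vs!0))" .
  thus ?thesis using True Rs2
    by (simp add: mu2 DK_def eta_add eta_pm add.commute)
qed

lemma Rs_cons:
  assumes l: "length ks = l" "length xs = l"
  shows "Rs (Suc l) (c # ks) (w # xs) = pm (\<Sum>p<l. 1 + c * ks ! p) (eta (br (mu l ks xs) w))
     + (\<Sum>p<l. pm (eT ks p) (eta (br (mu l (c # rmv p ks) (w # rmv p xs)) (xs ! p))))"
  unfolding Rs_def sum.lessThan_Suc_shift
  by (simp add: eT_cons0 eT_consS l)

end

lemma homog_sel:
  assumes h: "homog V ks vs" and S: "S \<subseteq> {..<length vs}"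
  shows "homog V (sel ks S) (sel vs S)"
proof -
  have f: "finite S" using S finite_subset by blast
  have "sorted_list_of_set S ! p \<in> S" if "p < card S" for p
    using that f by (metis length_sorted_list_of_set nth_mem set_sorted_list_of_set)
  hence "sorted_list_of_set S ! p < length vs" if "p < card S" for p using that S by auto
  thus ?thesis using h f by (auto simp: homog_def sel_nth)
qed

lemma sum_nth_sum_list: "(\<Sum>p<length xs. xs ! p) = sum_list (xs :: int list)"
  by (simp add: sum_list_sum_nth atLeast0LessThan)

lemma pm_opp: "odd (a - b) \<Longrightarrow> pm a z + pm b z = (0 :: 'v :: ab_group_add)"
  by (auto simp: pm_def)

lemma sum_neg_self_zero:
  fixes x :: "'v :: ab_group_add" and sc :: "'k::field_char_0 \<Rightarrow> 'v \<Rightarrow> 'v"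
  assumes vs: "vector_space sc" and e: "x = - x"
  shows "x = 0"
proof -
  have m: "module sc" using vs by (simp add: module_iff_vector_space)
  have "x + x = 0" using e by (metis add.right_inverse)
  hence "sc (1/2) (x + x) = 0" by (simp add: module.scale_zero_right[OF m])
  hence "sc (1/2) x + sc (1/2) x = 0" by (simp add: module.scale_right_distrib[OF m])
  moreover have e2: "sc (1/2 + 1/2) x = sc (1/2) x + sc (1/2) x" by (rule module.scale_left_distrib[OF m])
  moreover have "(1/2 + 1/2 :: 'k) = 1" by simp
  ultimately show ?thesis using module.scale_one[OF m, of x] by simp
qed

context kur begin

definition FD :: "nat \<Rightarrow> int list \<Rightarrow> 'v list \<Rightarrow> nat set \<Rightarrow> 'v" where
  "FD n ks vs S = pm (epsS ks S + int (card S * (n - card S)) + int (n - card S)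
        + (\<Sum>p<n - card S. 1 + (sum_list (sel ks S) + 2 - int (card S)) * sel ks ({..<n} - S) ! p))
     (eta (br (mu (n - card S) (sel ks ({..<n} - S)) (sel vs ({..<n} - S))) (mu (card S) (sel ks S) (sel vs S))))"

lemma FD_anti:
  assumes h: "homog V ks vs" and lv: "length vs = n" and S: "S \<subseteq> {..<n}" "0 < card S" "card S < n"
  shows "FD n ks vs ({..<n} - S) = - FD n ks vs S"
proof -
  define T where "T = {..<n} - S"
  define k where "k = card S"
  have lk: "length ks = n" using h lv by (simp add: homog_def)
  have fS: "finite S" "finite T" using S by (auto simp: T_def intro: finite_subset)
  have cT: "card T = n - k" using S fS by (simp add: T_def k_def card_Diff_subset)
  have TS: "{..<n} - T = S" using S by (auto simp: T_def)
  have Tsub: "T \<subseteq> {..<n}" by (auto simp: T_def)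
  have nk: "n - (n - k) = k" using S by (simp add: k_def)
  define KS where "KS = sum_list (sel ks S)"
  define KT where "KT = sum_list (sel ks T)"
  define dS where "dS = KS + 2 - int k"
  define dT where "dT = KT + 2 - int (n - k)"
  define muS where "muS = mu k (sel ks S) (sel vs S)"
  define muT where "muT = mu (n - k) (sel ks T) (sel vs T)"
  have hS: "homog V (sel ks S) (sel vs S)" by (rule homog_sel[OF h]) (use S lv in auto)
  have hT: "homog V (sel ks T) (sel vs T)" by (rule homog_sel[OF h]) (use Tsub lv in auto)
  have dgS: "muS \<in> V dS" unfolding muS_def dS_def KS_def
    by (rule mu_deg[OF hS]) (use fS S in \<open>auto simp: k_def\<close>)
  have dgT: "muT \<in> V dT" unfolding muT_def dT_def KT_def
    by (rule mu_deg[OF hT]) (use fS cT S in \<open>auto simp: k_def\<close>)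
  have E0S: "(\<Sum>p<n - k. 1 + dS * sel ks T ! p) = int (n - k) + dS * KT"
  proof -
    have "(\<Sum>p<n - k. 1 + dS * sel ks T ! p) = int (n - k) + dS * (\<Sum>p<length (sel ks T). sel ks T ! p)"
      using fS cT by (simp add: sum.distrib sum_distrib_left)
    thus ?thesis by (simp add: sum_nth_sum_list KT_def)
  qed
  have E0T: "(\<Sum>p<k. 1 + dT * sel ks S ! p) = int k + dT * KS"
  proof -
    have "(\<Sum>p<k. 1 + dT * sel ks S ! p) = int k + dT * (\<Sum>p<length (sel ks S). sel ks S ! p)"
      using fS by (simp add: sum.distrib sum_distrib_left k_def)
    thus ?thesis by (simp add: sum_nth_sum_list KS_def)
  qed
  have comp: "epsS ks S + epsS ks T = int k * int (n - k) + KS * KT"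
    using epsS_compl[of S ks] S lk fS cT by (simp add: T_def KS_def KT_def sum_list_sel k_def)
  have FS: "FD n ks vs S = pm (epsS ks S + int k * int (n - k) + int (n - k) + (int (n - k) + dS * KT)) (eta (br muT muS))"
    unfolding FD_def k_def[symmetric] T_def[symmetric] using E0S
    by (simp add: muS_def muT_def dS_def KS_def)
  have "FD n ks vs T = pm (epsS ks T + int (n - k) * int k + int k + (int k + dT * KS)) (eta (br muS muT))"
    unfolding FD_def cT nk TS using E0T
    by (simp add: muS_def muT_def dT_def KT_def mult.commute)
  also have "br muS muT = pm (1 + dS * dT) (br muT muS)" by (rule br_anti[OF dgS dgT])
  finally have FT: "FD n ks vs T = pm (epsS ks T + int (n - k) * int k + int k + (int k + dT * KS) + (1 + dS * dT)) (eta (br muT muS))"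
    by (simp add: eta_pm pm_pm)
  have X: "epsS ks S = int k * int (n - k) + KS * KT - epsS ks T" using comp by simp
  have eqo: "(epsS ks S + int k * int (n - k) + int (n - k) + (int (n - k) + dS * KT))
      - (epsS ks T + int (n - k) * int k + int k + (int k + dT * KS) + (1 + dS * dT))
      = 2 * (- epsS ks T + 2 * int (n - k) - 3 - 2 * KS + int (n - k) * KS) + 1"
    unfolding X dS_def dT_def by (simp add: algebra_simps)
  hence "odd ((epsS ks S + int k * int (n - k) + int (n - k) + (int (n - k) + dS * KT))
      - (epsS ks T + int (n - k) * int k + int k + (int k + dT * KS) + (1 + dS * dT)))"
    by (subst eqo) simp
  from pm_opp[OF this] have "FD n ks vs S + FD n ks vs T = 0" unfolding FS FT .
  thus ?thesis by (simp add: T_def eq_neg_iff_add_eq_0 add.commute)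
qed

lemma D_zero:
  assumes h: "homog V ks vs" and lv: "length vs = n"
  shows "(\<Sum>k\<in>{1..n-1}. \<Sum>S\<in>subs n k. pm (epsS ks S + int (k * (n - k)) + int (n - k)
            + (\<Sum>p<n - k. 1 + (sum_list (sel ks S) + 2 - int k) * sel ks ({..<n} - S) ! p))
          (eta (br (mu (n - k) (sel ks ({..<n} - S)) (sel vs ({..<n} - S))) (mu k (sel ks S) (sel vs S))))) = 0"
  (is "?X = 0")
proof -
  define Q where "Q = (\<Union>k\<in>{1..n-1}. subs n k)"
  have fsubs: "finite (subs n k)" for k
    by (rule finite_subset[of _ "Pow {..<n}"]) (auto simp: subs_def)
  have "?X = (\<Sum>k\<in>{1..n-1}. \<Sum>S\<in>subs n k. FD n ks vs S)"
    by (intro sum.cong refl) (auto simp: FD_def subs_def)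
  also have "\<dots> = (\<Sum>S\<in>Q. FD n ks vs S)" unfolding Q_def
    by (rule sum.UNION_disjoint[symmetric]) (auto simp: fsubs subs_def)
  finally have L: "?X = (\<Sum>S\<in>Q. FD n ks vs S)" .
  have Qc: "S \<in> Q \<longleftrightarrow> S \<subseteq> {..<n} \<and> 0 < card S \<and> card S < n" for S
    by (auto simp: Q_def subs_def)
  have bij: "bij_betw (\<lambda>S. {..<n} - S) Q Q"
  proof (rule bij_betw_byWitness[where f'="\<lambda>S. {..<n} - S"])
    show "\<forall>S\<in>Q. {..<n} - ({..<n} - S) = S" using Qc by auto
    thus "\<forall>S\<in>Q. {..<n} - ({..<n} - S) = S" .
    show "(\<lambda>S. {..<n} - S) ` Q \<subseteq> Q"
    proof
      fix X assume "X \<in> (\<lambda>S. {..<n} - S) ` Q"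
      then obtain S where S: "S \<in> Q" "X = {..<n} - S" by auto
      have "finite S" using S Qc finite_subset by blast
      hence "card X = n - card S" using S Qc by (simp add: card_Diff_subset)
      thus "X \<in> Q" using S Qc by auto
    qed
    thus "(\<lambda>S. {..<n} - S) ` Q \<subseteq> Q" .
  qed
  have "(\<Sum>S\<in>Q. FD n ks vs S) = (\<Sum>S\<in>Q. FD n ks vs ({..<n} - S))"
    by (rule sum.reindex_bij_betw[OF bij, symmetric])
  also have "\<dots> = (\<Sum>S\<in>Q. - FD n ks vs S)"
    by (rule sum.cong[OF refl]) (use Qc FD_anti[OF h lv] in auto)
  also have "\<dots> = - (\<Sum>S\<in>Q. FD n ks vs S)" by (simp add: sum_negf)
  finally have "(\<Sum>S\<in>Q. FD n ks vs S) = 0" by (rule sum_neg_self_zero[OF vs])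
  thus ?thesis using L by simp
qed

end

context kur begin

abbreviation "KM \<equiv> kur_mu sc d br eta"

definition HH :: "nat \<Rightarrow> int list \<Rightarrow> 'v list \<Rightarrow> nat set \<Rightarrow> nat \<Rightarrow> 'v" where
  "HH n ks vs S t = pm (epsS ks S + int (card S * (n - card S)) + int (n - card S)
       + (\<Sum>j\<in>{j\<in>{..<n} - S. t < j}. 1 + ks!t * ks!j))
     (eta (br (mu (n - card S) ((sum_list (sel ks S) + 2 - int (card S)) # sel ks ({..<n} - S - {t}))
                 (mu (card S) (sel ks S) (sel vs S) # sel vs ({..<n} - S - {t}))) (vs ! t)))"

lemma C1:
  assumes S: "S \<in> subs n k" and lk: "length ks = n"
  shows "(\<Sum>p<n-k. pm (epsS ks S + int (k*(n-k)) + int (n-k) + eT (sel ks ({..<n}-S)) p)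
      (eta (br (mu (n-k) ((sum_list (sel ks S) + 2 - int k) # rmv p (sel ks ({..<n}-S)))
                         (mu k (sel ks S) (sel vs S) # rmv p (sel vs ({..<n}-S))))
               (sel vs ({..<n}-S) ! p))))
    = (\<Sum>t\<in>{..<n} - S. HH n ks vs S t)"
proof -
  define T where "T = {..<n} - S"
  define L where "L = sorted_list_of_set T"
  have fS: "finite S" "S \<subseteq> {..<n}" "card S = k" using S by (auto simp: subs_def intro: finite_subset)
  have fT: "finite T" by (simp add: T_def)
  have cT: "card T = n - k" using fS by (simp add: T_def card_Diff_subset)
  have bij: "bij_betw ((!) L) {..<n-k} T"
    by (rule bij_betw_nth) (use fT cT in \<open>auto simp: L_def\<close>)
  have "(\<Sum>p<n-k. pm (epsS ks S + int (k*(n-k)) + int (n-k) + eT (sel ks T) p)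
      (eta (br (mu (n-k) ((sum_list (sel ks S) + 2 - int k) # rmv p (sel ks T))
                         (mu k (sel ks S) (sel vs S) # rmv p (sel vs T)))
               (sel vs T ! p))))
      = (\<Sum>p<n-k. HH n ks vs S (L ! p))"
  proof (rule sum.cong[OF refl])
    fix p assume p: "p \<in> {..<n-k}"
    hence p': "p < card T" using cT by simp
    show "pm (epsS ks S + int (k*(n-k)) + int (n-k) + eT (sel ks T) p)
      (eta (br (mu (n-k) ((sum_list (sel ks S) + 2 - int k) # rmv p (sel ks T))
                         (mu k (sel ks S) (sel vs S) # rmv p (sel vs T)))
               (sel vs T ! p))) = HH n ks vs S (L ! p)"
      unfolding HH_def T_def[symmetric] fS(3) L_def
      using rmv_sel[OF fT p', of ks] rmv_sel[OF fT p', of vs] eT_sel[OF fT p', of ks] sel_nth[OF fT p', of vs]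
      by simp
  qed
  also have "\<dots> = (\<Sum>t\<in>T. HH n ks vs S t)"
    by (rule sum.reindex_bij_betw[OF bij])
  finally show ?thesis by (simp add: T_def)
qed

lemma C2:
  fixes F :: "nat set \<Rightarrow> nat \<Rightarrow> 'v"
  shows "(\<Sum>k\<in>K. \<Sum>S\<in>subs n k. \<Sum>t\<in>{..<n} - S. F S t)
       = (\<Sum>t<n. \<Sum>k\<in>K. \<Sum>S\<in>{S\<in>subs n k. t \<notin> S}. F S t)"
proof -
  have fsubs: "finite (subs n k)" for k
    by (rule finite_subset[of _ "Pow {..<n}"]) (auto simp: subs_def)
  have "(\<Sum>k\<in>K. \<Sum>S\<in>subs n k. \<Sum>t\<in>{..<n} - S. F S t)
      = (\<Sum>k\<in>K. \<Sum>S\<in>subs n k. \<Sum>t<n. if t \<notin> S then F S t else 0)"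
  proof (rule sum.cong[OF refl], rule sum.cong[OF refl])
    fix k S
    have e: "{..<n} - S = {t\<in>{..<n}. t \<notin> S}" by auto
    show "(\<Sum>t\<in>{..<n} - S. F S t) = (\<Sum>t<n. if t \<notin> S then F S t else 0)"
      unfolding e by (rule sum.inter_filter) simp
  qed
  also have "\<dots> = (\<Sum>k\<in>K. \<Sum>t<n. \<Sum>S\<in>subs n k. if t \<notin> S then F S t else 0)"
    by (rule sum.cong[OF refl]) (rule sum.swap)
  also have "\<dots> = (\<Sum>t<n. \<Sum>k\<in>K. \<Sum>S\<in>subs n k. if t \<notin> S then F S t else 0)"
    by (rule sum.swap)
  also have "\<dots> = (\<Sum>t<n. \<Sum>k\<in>K. \<Sum>S\<in>{S\<in>subs n k. t \<notin> S}. F S t)"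
    by (rule sum.cong[OF refl], rule sum.cong[OF refl]) (simp add: sum.inter_filter fsubs)
  finally show ?thesis .
qed

lemma C3:
  assumes h: "homog V ks vs" and lv: "length vs = n" and n: "n = Suc N" and t: "t < n" and S': "S' \<in> subs N k"
    and k: "k \<in> {1..N}"
  shows "HH n ks vs (emb t ` S') t = pm (eT ks t + int n) (eta (br
      (pm (epsS (rmv t ks) S' + int (k * (N - k)))
        (KM ((sum_list (sel (rmv t ks) S') + 2 - int k) # sel (rmv t ks) ({..<N} - S'))
           (KM (sel (rmv t ks) S') (sel (rmv t vs) S') # sel (rmv t vs) ({..<N} - S')))) (vs ! t)))"
proof -
  have lk: "length ks = n" using h lv by (simp add: homog_def)
  define S where "S = emb t ` S'"
  have fS': "finite S'" "S' \<subseteq> {..<N}" "card S' = k" using S' by (auto simp: subs_def intro: finite_subset)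
  have cS: "card S = k" unfolding S_def using fS' by (simp add: card_image inj_on_subset[OF emb_inj])
  have Ssub: "S \<subseteq> {..<n}" "t \<notin> S" unfolding S_def using fS' n by (auto simp: emb_def)
  have sub1: "S' \<subseteq> {..<length ks - 1}" "S' \<subseteq> {..<length vs - 1}" using fS' lk lv n by auto
  have sub2: "{..<N} - S' \<subseteq> {..<length ks - 1}" "{..<N} - S' \<subseteq> {..<length vs - 1}" using lk lv n by auto
  have tl: "t < length ks" "t < length vs" using t lk lv by auto
  have cmp: "{..<n} - S - {t} = emb t ` ({..<N} - S')" unfolding S_def
    using emb_compl[OF t] fS' n by simp
  have sel1: "sel (rmv t ks) S' = sel ks S" "sel (rmv t vs) S' = sel vs S"
    unfolding S_def by (rule sel_emb[OF sub1(1) tl(1)], rule sel_emb[OF sub1(2) tl(2)])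
  have sel2: "sel (rmv t ks) ({..<N} - S') = sel ks ({..<n} - S - {t})"
             "sel (rmv t vs) ({..<N} - S') = sel vs ({..<n} - S - {t})"
    unfolding cmp by (rule sel_emb[OF sub2(1) tl(1)], rule sel_emb[OF sub2(2) tl(2)])
  have len1: "length (sel (rmv t vs) S') = k" using fS' by simp
  have len2: "length (mu k (sel ks S) (sel vs S) # sel (rmv t vs) ({..<N} - S')) = n - k"
    using fS' n k by (simp add: card_Diff_subset Suc_diff_le)
  have eps: "epsS ks S = epsS (rmv t ks) S' + (\<Sum>j\<in>{j\<in>S. t < j}. 1 + ks!t * ks!j)"
    unfolding S_def by (rule epsS_emb[OF tl(1) sub1(1)])
  have eTs: "eT ks t = (\<Sum>j\<in>{j\<in>S. t < j}. 1 + ks!t * ks!j) + (\<Sum>j\<in>{j\<in>{..<n} - S. t < j}. 1 + ks!t * ks!j)"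
  proof -
    have "{j\<in>S. t < j \<and> j < length ks} = {j\<in>S. t < j}" using Ssub lk by auto
    thus ?thesis using eT_split[OF tl(1) Ssub(2)] lk by simp
  qed
  have ar: "int (k * (n - k)) + int (n - k) = int n + int (k * (N - k))"
  proof -
    have "n - k = Suc (N - k)" using n k by auto
    hence "k * (n - k) = k * (N - k) + k" by simp
    moreover have "(n - k) + k = n" using n k by auto
    ultimately show ?thesis by linarith
  qed
  have ex: "epsS ks S + int (k * (n - k)) + int (n - k) + (\<Sum>j\<in>{j\<in>{..<n} - S. t < j}. 1 + ks!t * ks!j)
     = (eT ks t + int n) + (epsS (rmv t ks) S' + int (k * (N - k)))"
    unfolding eps eTs using ar by linarith
  have len1': "length (sel vs S) = k" using cS fS' S_def by simp
  have len2': "length (mu k (sel ks S) (sel vs S) # sel vs ({..<n} - S - {t})) = n - k"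
    using len2 unfolding sel1 sel2 .
  show ?thesis
    unfolding HH_def S_def[symmetric] cS kur_mu_def sel1 sel2 len1' len2'
    by (simp only: ex br_pm_l eta_pm pm_pm)
qed

lemma C_zero:
  assumes h: "homog V ks vs" and lv: "length vs = n" and n: "n = Suc N"
    and IH: "\<And>ks' vs'. homog V ks' vs' \<Longrightarrow> length vs' = N \<Longrightarrow> linf_sum sc KM KM ks' vs' = 0"
  shows "(\<Sum>k\<in>{1..N}. \<Sum>S\<in>subs n k. \<Sum>p<n-k. pm (epsS ks S + int (k*(n-k)) + int (n-k) + eT (sel ks ({..<n}-S)) p)
      (eta (br (mu (n-k) ((sum_list (sel ks S) + 2 - int k) # rmv p (sel ks ({..<n}-S)))
                         (mu k (sel ks S) (sel vs S) # rmv p (sel vs ({..<n}-S))))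
               (sel vs ({..<n}-S) ! p)))) = 0"
proof -
  have lk: "length ks = n" using h lv by (simp add: homog_def)
  have "(\<Sum>k\<in>{1..N}. \<Sum>S\<in>subs n k. \<Sum>p<n-k. pm (epsS ks S + int (k*(n-k)) + int (n-k) + eT (sel ks ({..<n}-S)) p)
      (eta (br (mu (n-k) ((sum_list (sel ks S) + 2 - int k) # rmv p (sel ks ({..<n}-S)))
                         (mu k (sel ks S) (sel vs S) # rmv p (sel vs ({..<n}-S))))
               (sel vs ({..<n}-S) ! p))))
     = (\<Sum>k\<in>{1..N}. \<Sum>S\<in>subs n k. \<Sum>t\<in>{..<n} - S. HH n ks vs S t)"
    by (intro sum.cong refl C1[OF _ lk]) simp
  also have "\<dots> = (\<Sum>t<n. \<Sum>k\<in>{1..N}. \<Sum>S\<in>{S\<in>subs n k. t \<notin> S}. HH n ks vs S t)"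
    by (rule C2)
  also have "\<dots> = (\<Sum>t<n. 0)"
  proof (rule sum.cong[OF refl])
    fix t assume t: "t \<in> {..<n}"
    hence t': "t < n" by simp
    have hr: "homog V (rmv t ks) (rmv t vs)" by (rule homog_rmv[OF h]) (use t' lv in simp)
    have lr: "length (rmv t vs) = N" using t' lv n by simp
    have lkr: "length (rmv t ks) = N" using t' lk n by simp
    have "(\<Sum>k\<in>{1..N}. \<Sum>S\<in>{S\<in>subs n k. t \<notin> S}. HH n ks vs S t)
        = (\<Sum>k\<in>{1..N}. \<Sum>S'\<in>subs N k. HH n ks vs (emb t ` S') t)"
    proof (rule sum.cong[OF refl])
      fix k
      show "(\<Sum>S\<in>{S\<in>subs n k. t \<notin> S}. HH n ks vs S t) = (\<Sum>S'\<in>subs N k. HH n ks vs (emb t ` S') t)"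
        using sum.reindex_bij_betw[OF bij_emb_subs[OF t', of k], of "\<lambda>S. HH n ks vs S t"] n by simp
    qed
    also have "\<dots> = (\<Sum>k\<in>{1..N}. \<Sum>S'\<in>subs N k. pm (eT ks t + int n) (eta (br
      (pm (epsS (rmv t ks) S' + int (k * (N - k)))
        (KM ((sum_list (sel (rmv t ks) S') + 2 - int k) # sel (rmv t ks) ({..<N} - S'))
           (KM (sel (rmv t ks) S') (sel (rmv t vs) S') # sel (rmv t vs) ({..<N} - S')))) (vs ! t))))"
      by (intro sum.cong refl C3[OF h lv n t']) auto
    also have "\<dots> = pm (eT ks t + int n) (eta (br (linf_sum sc KM KM (rmv t ks) (rmv t vs)) (vs ! t)))"
      unfolding linf_sub[OF lkr lr]
      by (simp only: br_sum_l eta_sum pm_sum)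
    also have "\<dots> = 0" using IH[OF hr lr] by simp
    finally show "(\<Sum>k\<in>{1..N}. \<Sum>S\<in>{S\<in>subs n k. t \<notin> S}. HH n ks vs S t) = 0" .
  qed
  finally show ?thesis by simp
qed

end

lemma subs_nn: "subs n n = {{..<n}}"
proof (intro equalityI subsetI)
  fix S assume "S \<in> subs n n"
  hence "S \<subseteq> {..<n}" "card S = card {..<n}" by (auto simp: subs_def)
  hence "S = {..<n}" by (intro card_subset_eq) auto
  thus "S \<in> {{..<n}}" by simp
qed (auto simp: subs_def)

lemma epsS_all: "length ks = n \<Longrightarrow> epsS ks {..<n} = 0"
  by (auto simp: epsS_def intro!: sum.neutral)

lemma sel_empty[simp]: "sel xs {} = []" by (simp add: sel_def)

lemma pm_diff: "pm z (x - y) = pm z x - pm z y" by (simp add: pm_def)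

context kur begin

lemma term_n:
  assumes lk: "length ks = n" and lv: "length vs = n"
  shows "(\<Sum>S\<in>subs n n. pm (epsS ks S + int (n * (n - n)))
      (G ((sum_list (sel ks S) + 2 - int n) # sel ks ({..<n} - S)) (M (sel ks S) (sel vs S) # sel vs ({..<n} - S))))
    = G [sum_list ks + 2 - int n] [M ks vs]"
proof -
  have "sel ks {..<n} = ks" "sel vs {..<n} = vs" using sel_all[of ks] sel_all[of vs] lk lv by auto
  thus ?thesis by (simp add: subs_nn epsS_all[OF lk])
qed

lemma A_lemma:
  assumes h: "homog V ks vs" and lv: "length vs = n" and n: "n = Suc N"
  shows "(\<Sum>S\<in>subs n N. pm (epsS ks S + int (N * (n - N)))
      (eta (br (mu N (sel ks S) (sel vs S)) (sel vs ({..<n} - S) ! 0)))) = pm (int N) (Rs n ks vs)"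
proof -
  have lk: "length ks = n" using h lv by (simp add: homog_def)
  have "(\<Sum>S\<in>subs n N. pm (epsS ks S + int (N * (n - N)))
      (eta (br (mu N (sel ks S) (sel vs S)) (sel vs ({..<n} - S) ! 0))))
    = (\<Sum>t<n. pm (epsS ks ({..<n} - {t}) + int (N * (n - N)))
      (eta (br (mu N (sel ks ({..<n} - {t})) (sel vs ({..<n} - {t}))) (sel vs ({..<n} - ({..<n} - {t})) ! 0))))"
    using sum_subs_n1[of n] n by simp
  also have "\<dots> = (\<Sum>t<n. pm (int N) (pm (eT ks t) (eta (br (mu N (rmv t ks) (rmv t vs)) (vs ! t)))))"
  proof (rule sum.cong[OF refl])
    fix t assume t: "t \<in> {..<n}"
    have "{..<n} - ({..<n} - {t}) = {t}" using t by auto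
    moreover have "sel ks ({..<n} - {t}) = rmv t ks" "sel vs ({..<n} - {t}) = rmv t vs" "epsS ks ({..<n} - {t}) = eT ks t"
      using sel_rmv[of t ks] sel_rmv[of t vs] epsS_rmv[of t ks] t lk lv by auto
    moreover have nN: "n - N = 1" using n by simp
    ultimately show "pm (epsS ks ({..<n} - {t}) + int (N * (n - N)))
      (eta (br (mu N (sel ks ({..<n} - {t})) (sel vs ({..<n} - {t}))) (sel vs ({..<n} - ({..<n} - {t})) ! 0)))
      = pm (int N) (pm (eT ks t) (eta (br (mu N (rmv t ks) (rmv t vs)) (vs ! t))))"
      by (simp add: sel_single pm_pm add.commute nN)
  qed
  also have "\<dots> = pm (int N) (Rs n ks vs)" by (simp only: Rs_def pm_sum n diff_Suc_1)
  finally show ?thesis .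
qed

lemma term_split:
  assumes h: "homog V ks vs" and lv: "length vs = n" and n: "n = Suc N" and k: "k \<in> {1..N}" and S: "S \<in> subs n k"
  shows "pm (epsS ks S + int (k*(n-k))) (KM ((sum_list (sel ks S) + 2 - int k) # sel ks ({..<n} - S))
           (KM (sel ks S) (sel vs S) # sel vs ({..<n} - S)))
    = pm (epsS ks S + int (k*(n-k))) (DK (Suc (n-k)) (mu k (sel ks S) (sel vs S) # sel vs ({..<n} - S)))
      - pm (epsS ks S + int (k*(n-k)) + int (n-k) + (\<Sum>p<n-k. 1 + (sum_list (sel ks S) + 2 - int k) * sel ks ({..<n} - S) ! p))
          (eta (br (mu (n-k) (sel ks ({..<n} - S)) (sel vs ({..<n} - S))) (mu k (sel ks S) (sel vs S))))
      - (\<Sum>p<n-k. pm (epsS ks S + int (k*(n-k)) + int (n-k) + eT (sel ks ({..<n}-S)) p)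
          (eta (br (mu (n-k) ((sum_list (sel ks S) + 2 - int k) # rmv p (sel ks ({..<n}-S)))
                         (mu k (sel ks S) (sel vs S) # rmv p (sel vs ({..<n}-S))))
               (sel vs ({..<n}-S) ! p))))"
proof -
  define T where "T = {..<n} - S"
  define e where "e = epsS ks S + int (k*(n-k))"
  define c where "c = sum_list (sel ks S) + 2 - int k"
  define w where "w = mu k (sel ks S) (sel vs S)"
  have lk: "length ks = n" using h lv by (simp add: homog_def)
  have fS: "finite S" "S \<subseteq> {..<n}" "card S = k" using S by (auto simp: subs_def intro: finite_subset)
  have cT: "card T = n - k" using fS by (simp add: T_def card_Diff_subset)
  have lT: "length (sel ks T) = n - k" "length (sel vs T) = n - k" using cT by (auto simp: T_def)
  have hS: "homog V (sel ks S) (sel vs S)" by (rule homog_sel[OF h]) (use fS lv in auto)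
  have hT: "homog V (sel ks T) (sel vs T)" by (rule homog_sel[OF h]) (use lv in \<open>auto simp: T_def\<close>)
  have wd: "w \<in> V c" unfolding w_def c_def by (rule mu_deg[OF hS]) (use fS k in auto)
  have hL: "homog V (c # sel ks T) (w # sel vs T)"
    using hT wd by (auto simp: homog_def nth_Cons split: nat.split)
  have m2: "2 \<le> Suc (n - k)" using n k by auto
  have KMi: "KM (sel ks S) (sel vs S) = w" by (simp add: kur_mu_def w_def fS)
  have KMo: "KM (c # sel ks T) (w # sel vs T) = mu (Suc (n-k)) (c # sel ks T) (w # sel vs T)"
    by (simp add: kur_mu_def lT)
  have M1: "mu (Suc (n-k)) (c # sel ks T) (w # sel vs T)
      = DK (Suc (n-k)) (w # sel vs T) - pm (int (n-k)) (Rs (Suc (n-k)) (c # sel ks T) (w # sel vs T))"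
    using mu_P[OF m2 hL] by (simp add: lT)
  have M2: "Rs (Suc (n-k)) (c # sel ks T) (w # sel vs T)
     = pm (\<Sum>p<n-k. 1 + c * sel ks T ! p) (eta (br (mu (n-k) (sel ks T) (sel vs T)) w))
     + (\<Sum>p<n-k. pm (eT (sel ks T) p) (eta (br (mu (n-k) (c # rmv p (sel ks T)) (w # rmv p (sel vs T))) (sel vs T ! p))))"
    by (rule Rs_cons[OF lT])
  note M = M1[unfolded M2]
  show ?thesis
    unfolding T_def[symmetric] e_def[symmetric] c_def[symmetric] w_def[symmetric] KMi KMo M
    by (simp add: pm_diff pm_plus pm_sum pm_pm add.assoc)
qed

lemma J_zero:
  "homog V ks vs \<Longrightarrow> length vs = n \<Longrightarrow> 1 \<le> n \<Longrightarrow> linf_sum sc KM KM ks vs = 0"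
proof (induction n arbitrary: ks vs)
  case 0 thus ?case by simp
next
  case (Suc N)
  note h = Suc.prems(1) and lv = Suc.prems(2)
  have lk: "length ks = Suc N" using h lv by (simp add: homog_def)
  let ?n = "Suc N"
  define Tm where "Tm = (\<lambda>k S. pm (epsS ks S + int (k * (?n - k)))
      (KM ((sum_list (sel ks S) + 2 - int k) # sel ks ({..<?n} - S)) (KM (sel ks S) (sel vs S) # sel vs ({..<?n} - S))))"
  have L: "linf_sum sc KM KM ks vs = (\<Sum>k\<in>{1..?n}. \<Sum>S\<in>subs ?n k. Tm k S)"
    unfolding Tm_def by (rule linf_sub[OF lk lv])
  have Ln: "(\<Sum>S\<in>subs ?n ?n. Tm ?n S) = d (mu ?n ks vs)"
    unfolding Tm_def term_n[OF lk lv] by (simp add: kur_mu_def lv)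
  show ?case
  proof (cases "N = 0")
    case True
    have "linf_sum sc KM KM ks vs = d (mu ?n ks vs)" unfolding L using Ln True by simp
    thus ?thesis using True by simp
  next
    case False
    hence N1: "1 \<le> N" by simp
    have IH: "\<And>ks' vs'. homog V ks' vs' \<Longrightarrow> length vs' = N \<Longrightarrow> linf_sum sc KM KM ks' vs' = 0"
      using Suc.IH N1 by blast
    define A where "A = (\<lambda>k S. pm (epsS ks S + int (k*(?n-k))) (DK (Suc (?n-k)) (mu k (sel ks S) (sel vs S) # sel vs ({..<?n} - S))))"
    define D where "D = (\<lambda>k S. pm (epsS ks S + int (k*(?n-k)) + int (?n-k) + (\<Sum>p<?n-k. 1 + (sum_list (sel ks S) + 2 - int k) * sel ks ({..<?n} - S) ! p))
          (eta (br (mu (?n-k) (sel ks ({..<?n} - S)) (sel vs ({..<?n} - S))) (mu k (sel ks S) (sel vs S)))))"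
    define C where "C = (\<lambda>k S. (\<Sum>p<?n-k. pm (epsS ks S + int (k*(?n-k)) + int (?n-k) + eT (sel ks ({..<?n}-S)) p)
          (eta (br (mu (?n-k) ((sum_list (sel ks S) + 2 - int k) # rmv p (sel ks ({..<?n}-S)))
                         (mu k (sel ks S) (sel vs S) # rmv p (sel vs ({..<?n}-S))))
               (sel vs ({..<?n}-S) ! p)))))"
    have split: "(\<Sum>k\<in>{1..N}. \<Sum>S\<in>subs ?n k. Tm k S)
        = (\<Sum>k\<in>{1..N}. \<Sum>S\<in>subs ?n k. A k S) - (\<Sum>k\<in>{1..N}. \<Sum>S\<in>subs ?n k. D k S) - (\<Sum>k\<in>{1..N}. \<Sum>S\<in>subs ?n k. C k S)"
    proof -
      have "(\<Sum>k\<in>{1..N}. \<Sum>S\<in>subs ?n k. Tm k S) = (\<Sum>k\<in>{1..N}. \<Sum>S\<in>subs ?n k. A k S - D k S - C k S)"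
      proof (rule sum.cong[OF refl], rule sum.cong[OF refl])
        fix k S assume k: "k \<in> {1..N}" and S: "S \<in> subs ?n k"
        show "Tm k S = A k S - D k S - C k S"
          unfolding Tm_def A_def D_def C_def by (rule term_split[OF h lv refl k S])
      qed
      thus ?thesis by (simp only: sum_subtractf)
    qed
    have D0: "(\<Sum>k\<in>{1..N}. \<Sum>S\<in>subs ?n k. D k S) = 0"
      using D_zero[OF h lv] unfolding D_def by simp
    have C0: "(\<Sum>k\<in>{1..N}. \<Sum>S\<in>subs ?n k. C k S) = 0"
      unfolding C_def by (rule C_zero[OF h lv refl IH])
    have A1: "(\<Sum>k\<in>{1..N}. \<Sum>S\<in>subs ?n k. A k S) = (\<Sum>S\<in>subs ?n N. A N S)"
    proof -
      have "(\<Sum>k\<in>{1..N}. \<Sum>S\<in>subs ?n k. A k S) = (\<Sum>S\<in>subs ?n N. A N S) + (\<Sum>k\<in>{1..N} - {N}. \<Sum>S\<in>subs ?n k. A k S)"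
        by (rule sum.remove) (use N1 in auto)
      also have "(\<Sum>k\<in>{1..N} - {N}. \<Sum>S\<in>subs ?n k. A k S) = 0"
      proof (rule sum.neutral, intro ballI)
        fix k assume "k \<in> {1..N} - {N}"
        hence "Suc (?n - k) \<noteq> 2" by auto
        hence "DK (Suc (?n - k)) xs = 0" for xs by (simp add: DK_def)
        thus "(\<Sum>S\<in>subs ?n k. A k S) = 0" by (simp add: A_def)
      qed
      finally show ?thesis by simp
    qed
    have A2: "(\<Sum>S\<in>subs ?n N. A N S) = d (pm (int N) (Rs ?n ks vs))"
    proof -
      have "(\<Sum>S\<in>subs ?n N. A N S) = (\<Sum>S\<in>subs ?n N. d (pm (epsS ks S + int (N * (?n - N)))
             (eta (br (mu N (sel ks S) (sel vs S)) (sel vs ({..<?n} - S) ! 0)))))"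
      proof (rule sum.cong[OF refl])
        fix S
        have "Suc (?n - N) = 2" by simp
        hence "DK (Suc (?n - N)) (mu N (sel ks S) (sel vs S) # sel vs ({..<?n} - S))
             = d (eta (br (mu N (sel ks S) (sel vs S)) (sel vs ({..<?n} - S) ! 0)))"
          by (simp only: DK_def if_True) simp
        thus "A N S = d (pm (epsS ks S + int (N * (?n - N)))
             (eta (br (mu N (sel ks S) (sel vs S)) (sel vs ({..<?n} - S) ! 0))))"
          by (simp only: A_def d_pm)
      qed
      also have "\<dots> = d (pm (int N) (Rs ?n ks vs))"
        by (simp only: d_sum[symmetric] A_lemma[OF h lv refl])
      finally show ?thesis .
    qed
    have dmu: "d (mu ?n ks vs) = - d (pm (int N) (Rs ?n ks vs))"
    proof -
      have eqm: "mu ?n ks vs = DK ?n vs - pm (int ?n - 1) (Rs ?n ks vs)" by (rule mu_P) (use N1 h lv in auto)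
      have e1: "d (mu ?n ks vs) = d (DK ?n vs) - d (pm (int ?n - 1) (Rs ?n ks vs))"
        by (simp only: eqm module_hom.diff[OF hd])
      have e2: "d (DK ?n vs) = 0" by (simp add: DK_def)
      have e3: "int ?n - 1 = int N" by simp
      show ?thesis by (simp only: e1 e2 e3 diff_0)
    qed
    have "linf_sum sc KM KM ks vs = (\<Sum>k\<in>{1..N}. \<Sum>S\<in>subs ?n k. Tm k S) + d (mu ?n ks vs)"
      unfolding L Ln[symmetric] by (simp add: sum.cl_ivl_Suc)
    also have "\<dots> = 0" unfolding split D0 C0 A1 A2 dmu by simp
    finally show ?thesis .
  qed
qed

end

context kur begin

lemma sc_one: "sc 1 x = x" by (rule module.scale_one[OF md])
lemma sc_zero_l: "sc 0 x = 0" by (rule module.scale_zero_left[OF md])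
lemma sc_zero_r: "sc c 0 = 0" by (rule module.scale_zero_right[OF md])
lemma sc_uminus: "sc c (- x) = - sc c x" by (rule module.scale_minus_right[OF md])

lemma ksign_pm: "- sc (of_int (ksign a b)) z = pm (1 + a * b) z"
  by (simp add: ksign_neg1 sc_neg1 pm_def)

lemma KM_multilin: "graded_multilin sc V V (\<lambda>k. 2 - int k) KM"
  unfolding graded_multilin_def
proof (intro allI impI conjI ballI)
  fix ks vs assume a: "homog V ks vs \<and> 1 \<le> length vs"
  hence h: "homog V ks vs" and n1: "1 \<le> length vs" by auto
  have lk: "length ks = length vs" using h by (simp add: homog_def)
  show "KM ks vs \<in> V (sum_list ks + (2 - int (length vs)))"
    using mu_deg[OF h refl n1] by (simp add: kur_mu_def add_diff_eq)
  fix j x y assume j: "j < length vs"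
  show "KM ks (vs[j := x + y]) = KM ks (vs[j := x]) + KM ks (vs[j := y])"
    using mu_lin[OF lk refl j, of 1 x 1 y] by (simp add: kur_mu_def sc_one)
next
  fix ks vs j c x assume a: "homog V ks vs \<and> 1 \<le> length vs" and j: "j < length vs"
  have lk: "length ks = length vs" using a by (simp add: homog_def)
  show "KM ks (vs[j := sc c x]) = sc c (KM ks (vs[j := x]))"
    using mu_lin[OF lk refl j, of c x 0 x] by (simp add: kur_mu_def sc_zero_l)
next
  fix ks vs j assume a: "homog V ks vs \<and> 1 \<le> length vs" and j: "Suc j < length vs"
  show "KM (swapadj ks j) (swapadj vs j) = - sc (of_int (ksign (ks ! j) (ks ! Suc j))) (KM ks vs)"
    using mu_anti[of ks vs "length vs" j] a j by (simp add: kur_mu_def ksign_pm)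
qed

lemma K_multilin: "graded_multilin sc V V (\<lambda>n. 1 - int n) (kuranishi br eta)"
  unfolding graded_multilin_def
proof (intro allI impI conjI ballI)
  fix ks vs assume a: "homog V ks vs \<and> 1 \<le> length vs"
  hence h: "homog V ks vs" and n1: "1 \<le> length vs" by auto
  have lk: "length ks = length vs" using h by (simp add: homog_def)
  have hv: "vs ! i \<in> V (ks ! i)" if "i < length vs" for i using h that by (simp add: homog_def)
  show "kuranishi br eta ks vs \<in> V (sum_list ks + (1 - int (length vs)))"
  proof -
    consider "length vs = 1" | "length vs = 2" | "length vs \<noteq> 1" "length vs \<noteq> 2" by blast
    thus ?thesis
    proof cases
      case 1
      then obtain k0 where "ks = [k0]" using lk by (metis One_nat_def length_0_conv length_Suc_conv)
      thus ?thesis using 1 hv[of 0] by (simp add: kuranishi_def)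
    next
      case 2
      then obtain k0 k1 where k: "ks = [k0, k1]" using lk by (metis One_nat_def length_0_conv length_Suc_conv numeral_2_eq_2)
      have "eta (br (vs!0) (vs!1)) \<in> V (ks!0 + ks!1 - 1)" by (rule eta_deg, rule br_deg) (use hv 2 in auto)
      thus ?thesis using 2 k by (simp add: kuranishi_def)
    next
      case 3 thus ?thesis by (simp add: kuranishi_def)
    qed
  qed
  fix j x y assume j: "j < length vs"
  show "kuranishi br eta ks (vs[j := x + y]) = kuranishi br eta ks (vs[j := x]) + kuranishi br eta ks (vs[j := y])"
  proof (cases "length vs = 2")
    case True
    hence "j = 0 \<or> j = 1" using j by auto
    thus ?thesis using True by (auto simp: kuranishi_def br_add_l br_add_r eta_add)
  qed (use j in \<open>auto simp: kuranishi_def\<close>)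
next
  fix ks vs j c x assume a: "homog V ks vs \<and> 1 \<le> length vs" and j: "j < length vs"
  show "kuranishi br eta ks (vs[j := sc c x]) = sc c (kuranishi br eta ks (vs[j := x]))"
  proof (cases "length vs = 2")
    case True
    hence "j = 0 \<or> j = 1" using j by auto
    thus ?thesis using True by (auto simp: kuranishi_def br_sc_l br_sc_r eta_sc)
  qed (use j in \<open>auto simp: kuranishi_def sc_zero_r\<close>)
next
  fix ks vs j assume a: "homog V ks vs \<and> 1 \<le> length vs" and j: "Suc j < length vs"
  have lk: "length ks = length vs" using a by (simp add: homog_def)
  have hv: "vs ! i \<in> V (ks ! i)" if "i < length vs" for i using a that by (simp add: homog_def)
  show "kuranishi br eta (swapadj ks j) (swapadj vs j) = - sc (of_int (ksign (ks ! j) (ks ! Suc j))) (kuranishi br eta ks vs)"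
  proof (cases "length vs = 2")
    case True
    hence j0: "j = 0" using j by auto
    have "br (vs!1) (vs!0) = pm (1 + ks!0 * ks!1) (br (vs!0) (vs!1))"
      using br_anti[OF hv[of 1] hv[of 0]] True by (simp add: mult.commute)
    thus ?thesis using True j0 lk by (simp add: kuranishi_def ksign_pm nth_swapadj eta_pm)
  qed (use j in \<open>auto simp: kuranishi_def sc_zero_r\<close>)
qed

lemma dab_multilin: "graded_multilin sc V V (\<lambda>k. 2 - int k) (dab d)"
  unfolding graded_multilin_def
proof (intro allI impI conjI ballI)
  fix ks vs assume a: "homog V ks vs \<and> 1 \<le> length vs"
  have lk: "length ks = length vs" using a by (simp add: homog_def)
  have hv: "vs ! i \<in> V (ks ! i)" if "i < length vs" for i using a that by (simp add: homog_def)
  show "dab d ks vs \<in> V (sum_list ks + (2 - int (length vs)))"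
  proof (cases "length vs = 1")
    case True
    then obtain k0 where "ks = [k0]" using lk by (metis One_nat_def length_0_conv length_Suc_conv)
    thus ?thesis using True d_deg[OF hv[of 0]] by (simp add: dab_def add.commute)
  qed (simp add: dab_def)
  fix j x y assume j: "j < length vs"
  show "dab d ks (vs[j := x + y]) = dab d ks (vs[j := x]) + dab d ks (vs[j := y])"
    using j by (auto simp: dab_def d_add)
next
  fix ks vs j c x assume a: "homog V ks vs \<and> 1 \<le> length vs" and j: "j < length vs"
  show "dab d ks (vs[j := sc c x]) = sc c (dab d ks (vs[j := x]))"
    using j by (auto simp: dab_def d_sc sc_zero_r)
next
  fix ks vs j assume a: "homog V ks vs \<and> 1 \<le> length vs" and j: "Suc j < length vs"
  show "dab d (swapadj ks j) (swapadj vs j) = - sc (of_int (ksign (ks ! j) (ks ! Suc j))) (dab d ks vs)"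
    using j by (simp add: dab_def sc_zero_r)
qed

lemma dab_linf:
  assumes h: "homog V ks vs" and n1: "1 \<le> length vs"
  shows "linf_sum sc (dab d) (dab d) ks vs = 0"
proof -
  have lk: "length ks = length vs" using h by (simp add: homog_def)
  show ?thesis
    unfolding linf_sub[OF lk refl]
  proof (intro sum.neutral ballI)
    fix k S assume k: "k \<in> {1..length vs}" and S: "S \<in> subs (length vs) k"
    have fS: "finite S" "card S = k" "S \<subseteq> {..<length vs}" using S by (auto simp: subs_def intro: finite_subset)
    have cT: "card ({..<length vs} - S) = length vs - k" using fS by (simp add: card_Diff_subset)
    show "pm (epsS ks S + int (k * (length vs - k)))
        (dab d ((sum_list (sel ks S) + 2 - int k) # sel ks ({..<length vs} - S))
          (dab d (sel ks S) (sel vs S) # sel vs ({..<length vs} - S))) = 0"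
    proof (cases "k = length vs")
      case True
      hence "card ({..<length vs} - S) = 0" using cT by simp
      moreover have "dab d (sel ks S) (sel vs S) = (if k = 1 then d (sel vs S ! 0) else 0)"
        using fS by (simp add: dab_def)
      ultimately show ?thesis using fS by (auto simp: dab_def)
    next
      case False
      hence "card ({..<length vs} - S) \<noteq> 0" using cT k by simp
      thus ?thesis by (simp add: dab_def)
    qed
  qed
qed

lemma morph:
  assumes h: "homog V ks vs" and n1: "1 \<le> length vs"
  shows "d (kuranishi br eta ks vs) = linf_sum sc (kuranishi br eta) KM ks vs"
proof -
  define n where "n = length vs"
  have "n \<noteq> 0" using n1 unfolding n_def by linarith
  then obtain N where n: "n = Suc N" using not0_implies_Suc by blast
  have lk: "length ks = n" using h n_def by (simp add: homog_def)
  have lv: "length vs = n" by (simp add: n_def)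
  let ?K = "kuranishi br eta"
  define Tm where "Tm = (\<lambda>k S. pm (epsS ks S + int (k * (n - k)))
      (?K ((sum_list (sel ks S) + 2 - int k) # sel ks ({..<n} - S)) (KM (sel ks S) (sel vs S) # sel vs ({..<n} - S))))"
  have L: "linf_sum sc ?K KM ks vs = (\<Sum>k\<in>{1..n}. \<Sum>S\<in>subs n k. Tm k S)"
    unfolding Tm_def by (rule linf_sub[OF lk lv])
  have Ln: "(\<Sum>S\<in>subs n n. Tm n S) = mu n ks vs"
    unfolding Tm_def term_n[OF lk lv] by (simp add: kur_mu_def kuranishi_def lv)
  show ?thesis
  proof (cases "N = 0")
    case True
    hence "linf_sum sc ?K KM ks vs = mu 1 ks vs" using L Ln n by simp
    thus ?thesis using True n lv by (simp add: kuranishi_def)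
  next
    case False
    hence N1: "1 \<le> N" by simp
    have T1: "(\<Sum>k\<in>{1..N}. \<Sum>S\<in>subs n k. Tm k S) = (\<Sum>S\<in>subs n N. Tm N S)"
    proof -
      have "(\<Sum>k\<in>{1..N}. \<Sum>S\<in>subs n k. Tm k S) = (\<Sum>S\<in>subs n N. Tm N S) + (\<Sum>k\<in>{1..N} - {N}. \<Sum>S\<in>subs n k. Tm k S)"
        by (rule sum.remove) (use N1 in auto)
      also have "(\<Sum>k\<in>{1..N} - {N}. \<Sum>S\<in>subs n k. Tm k S) = 0"
      proof (rule sum.neutral, intro ballI)
        fix k assume k: "k \<in> {1..N} - {N}"
        show "(\<Sum>S\<in>subs n k. Tm k S) = 0"
        proof (rule sum.neutral, intro ballI)
          fix S assume S: "S \<in> subs n k"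
          have fS: "finite S" "card S = k" "S \<subseteq> {..<n}" using S by (auto simp: subs_def intro: finite_subset)
          have cT: "card ({..<n} - S) = n - k" using fS by (simp add: card_Diff_subset)
          have "Suc (card ({..<n} - S)) \<noteq> 1" "Suc (card ({..<n} - S)) \<noteq> 2" using cT k n by auto
          moreover have lT: "length (sel vs ({..<n} - S)) = n - k" using cT by simp
          ultimately have K0: "?K a (b # sel vs ({..<n} - S)) = 0" for a b
            unfolding kuranishi_def by (simp only: length_Cons lT cT[symmetric]) simp
          show "Tm k S = 0" unfolding Tm_def K0 by simp
        qed
      qed
      finally show ?thesis by simp
    qed
    have T2: "(\<Sum>S\<in>subs n N. Tm N S) = pm (int N) (Rs n ks vs)"
    proof -
      have "(\<Sum>S\<in>subs n N. Tm N S) = (\<Sum>S\<in>subs n N. pm (epsS ks S + int (N * (n - N)))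
           (eta (br (mu N (sel ks S) (sel vs S)) (sel vs ({..<n} - S) ! 0))))"
      proof (rule sum.cong[OF refl])
        fix S assume S: "S \<in> subs n N"
        have fS: "finite S" "card S = N" "S \<subseteq> {..<n}" using S by (auto simp: subs_def intro: finite_subset)
        have cT: "card ({..<n} - S) = 1" using fS n by (simp add: card_Diff_subset)
        show "Tm N S = pm (epsS ks S + int (N * (n - N)))
           (eta (br (mu N (sel ks S) (sel vs S)) (sel vs ({..<n} - S) ! 0)))"
        proof -
          have lT: "length (sel vs ({..<n} - S)) = 1" using cT by simp
          have lS: "length (sel vs S) = N" using fS by simp
          have K2: "?K a (b # sel vs ({..<n} - S)) = eta (br b (sel vs ({..<n} - S) ! 0))" for a b
            unfolding kuranishi_def by (simp only: length_Cons lT) simp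
          show ?thesis unfolding Tm_def K2 kur_mu_def lS by simp
        qed
      qed
      also have "\<dots> = pm (int N) (Rs n ks vs)" by (rule A_lemma[OF h lv n])
      finally show ?thesis .
    qed
    have eqm: "mu n ks vs = DK n vs - pm (int n - 1) (Rs n ks vs)" by (rule mu_P) (use N1 h lv n in auto)
    have "linf_sum sc ?K KM ks vs = (\<Sum>k\<in>{1..N}. \<Sum>S\<in>subs n k. Tm k S) + (\<Sum>S\<in>subs n n. Tm n S)"
      unfolding L n by (simp only: sum.cl_ivl_Suc) simp
    also have "\<dots> = pm (int N) (Rs n ks vs) + mu n ks vs" by (simp only: T1 T2 Ln)
    also have "\<dots> = DK n vs"
    proof -
      have "int n - 1 = int N" using n by simp
      thus ?thesis unfolding eqm by simp
    qed
    also have "\<dots> = d (?K ks vs)" using n False by (simp add: DK_def kuranishi_def lv)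
    finally show ?thesis by simp
  qed
qed

end

theorem theorem3p2:
  fixes sc :: "'k::field_char_0 \<Rightarrow> 'v::ab_group_add \<Rightarrow> 'v"
    and V :: "int \<Rightarrow> 'v set"
    and d eta :: "'v \<Rightarrow> 'v"
    and br :: "'v \<Rightarrow> 'v \<Rightarrow> 'v"
  assumes "DGLA sc V d br"
    and "graded_lin sc V (-1) eta"
  shows "Linf_iso_dab sc V (kur_mu sc d br eta) V d (kuranishi br eta)"
proof -
  interpret kur sc V d eta br using assms by unfold_locales
  show ?thesis
    unfolding Linf_iso_dab_def Linf_morphism_dab_def Linf_algebra_def
  proof (intro conjI allI impI)
    show "graded_vs sc V" by (rule gv)
    show "graded_vs sc V" by (rule gv)
    show "graded_multilin sc V V (\<lambda>k. 2 - int k) (kur_mu sc d br eta)" by (rule KM_multilin)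
    show "graded_multilin sc V V (\<lambda>k. 2 - int k) (dab d)" by (rule dab_multilin)
    show "graded_multilin sc V V (\<lambda>n. 1 - int n) (kuranishi br eta)" by (rule K_multilin)
  next
    fix ks vs assume "homog V ks vs \<and> 1 \<le> length vs"
    thus "linf_sum sc (kur_mu sc d br eta) (kur_mu sc d br eta) ks vs = 0"
      using J_zero by blast
  next
    fix ks vs assume "homog V ks vs \<and> 1 \<le> length vs"
    thus "linf_sum sc (dab d) (dab d) ks vs = 0" using dab_linf by blast
  next
    fix ks vs assume "homog V ks vs \<and> 1 \<le> length vs"
    thus "d (kuranishi br eta ks vs) = linf_sum sc (kuranishi br eta) (kur_mu sc d br eta) ks vs"
      using morph by blast
  next
    fix i
    show "bij_betw (\<lambda>v. kuranishi br eta [i] [v]) (V i) (V i)"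
      by (simp add: kuranishi_def bij_betw_id[unfolded id_def])
  qed
qed


end
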